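(* Let $G=P_n$ be a path on $n\ge3$ vertices, and let $L$ be a list-assignment with $|L(v)|\ge\deg(v)+1$ for all $v\in V(G)$. If $\alpha$ and $\beta$ are both unfrozen $L$-colourings and $\left|\bigcup_{v\in V(G)}L(v)\right|\ge4$, then $\alpha\sim\beta$.
   Context: An $L$-colouring is a proper colouring $\varphi$ with $\varphi(v)\in L(v)$ for all $v$. A vertex $v$ is frozen under $\varphi$ if every colour of $L(v)\setminus\{\varphi(v)\}$ appears on a neighbour of $v$; a colouring is unfrozen if at least one vertex is not frozen. $\alpha\sim\beta$ means $\alpha$ can be transformed into $\beta$ by a sequence of single-vertex recolouring steps, each keeping the colouring a proper $L$-colouring. *)

theory Defs
  imports Main
begin

definition path_adj :: "nat \<Rightarrow> nat \<Rightarrow> nat \<Rightarrow> bool" where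
  "path_adj n u v \<longleftrightarrow> u < n \<and> v < n \<and> (v = Suc u \<or> u = Suc v)"

definition path_verts :: "nat \<Rightarrow> nat set" where
  "path_verts n = {0..<n}"

definition degree :: "'v set \<Rightarrow> ('v \<Rightarrow> 'v \<Rightarrow> bool) \<Rightarrow> 'v \<Rightarrow> nat" where
  "degree V E v = card {u \<in> V. E v u}"

definition L_colouring ::
  "'v set \<Rightarrow> ('v \<Rightarrow> 'v \<Rightarrow> bool) \<Rightarrow> ('v \<Rightarrow> 'c set) \<Rightarrow> ('v \<Rightarrow> 'c) \<Rightarrow> bool" where
  "L_colouring V E L \<phi> \<longleftrightarrow>
     (\<forall>v\<in>V. \<phi> v \<in> L v) \<and> (\<forall>u\<in>V. \<forall>v\<in>V. E u v \<longrightarrow> \<phi> u \<noteq> \<phi> v)"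

definition frozen ::
  "'v set \<Rightarrow> ('v \<Rightarrow> 'v \<Rightarrow> bool) \<Rightarrow> ('v \<Rightarrow> 'c set) \<Rightarrow> ('v \<Rightarrow> 'c) \<Rightarrow> 'v \<Rightarrow> bool" where
  "frozen V E L \<phi> v \<longleftrightarrow> (\<forall>c \<in> L v - {\<phi> v}. \<exists>u\<in>V. E v u \<and> \<phi> u = c)"

definition unfrozen ::
  "'v set \<Rightarrow> ('v \<Rightarrow> 'v \<Rightarrow> bool) \<Rightarrow> ('v \<Rightarrow> 'c set) \<Rightarrow> ('v \<Rightarrow> 'c) \<Rightarrow> bool" where
  "unfrozen V E L \<phi> \<longleftrightarrow> (\<exists>v\<in>V. \<not> frozen V E L \<phi> v)"

(* One recolouring step: both are proper L-colourings and they agree on all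
   vertices except possibly one. Values outside V are irrelevant. *)
definition recolour_step ::
  "'v set \<Rightarrow> ('v \<Rightarrow> 'v \<Rightarrow> bool) \<Rightarrow> ('v \<Rightarrow> 'c set) \<Rightarrow> ('v \<Rightarrow> 'c) \<Rightarrow> ('v \<Rightarrow> 'c) \<Rightarrow> bool" where
  "recolour_step V E L \<alpha> \<beta> \<longleftrightarrow>
     L_colouring V E L \<alpha> \<and> L_colouring V E L \<beta> \<and>
     (\<exists>v\<in>V. \<forall>u\<in>V - {v}. \<alpha> u = \<beta> u)"

definition reconf ::
  "'v set \<Rightarrow> ('v \<Rightarrow> 'v \<Rightarrow> bool) \<Rightarrow> ('v \<Rightarrow> 'c set) \<Rightarrow> ('v \<Rightarrow> 'c) \<Rightarrow> ('v \<Rightarrow> 'c) \<Rightarrow> bool" where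
  "reconf V E L \<alpha> \<beta> \<longleftrightarrow> (recolour_step V E L)\<^sup>*\<^sup>* \<alpha> \<beta>"

end

theory Submission
  imports Defs
begin


abbreviation "Col n L \<alpha> \<equiv> L_colouring (path_verts n) (path_adj n) L \<alpha>"
abbreviation "Rc n L \<alpha> \<beta> \<equiv> reconf (path_verts n) (path_adj n) L \<alpha> \<beta>"

definition free :: "nat \<Rightarrow> (nat \<Rightarrow> 'c set) \<Rightarrow> (nat \<Rightarrow> 'c) \<Rightarrow> nat \<Rightarrow> bool" where
  "free n L \<alpha> v \<longleftrightarrow> (\<exists>s\<in>L v. s \<noteq> \<alpha> v \<and> (0 < v \<longrightarrow> \<alpha> (v-1) \<noteq> s) \<and> (Suc v < n \<longrightarrow> \<alpha> (Suc v) \<noteq> s))"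

definition dg :: "nat \<Rightarrow> nat \<Rightarrow> nat" where
  "dg n v = (if 0 < v then 1 else 0) + (if Suc v < n then 1 else 0)"

lemma Col_iff: "Col n L \<alpha> \<longleftrightarrow> (\<forall>v<n. \<alpha> v \<in> L v) \<and> (\<forall>i. Suc i < n \<longrightarrow> \<alpha> i \<noteq> \<alpha> (Suc i))"
proof -
  have "(\<forall>u<n. \<forall>v<n. (v = Suc u \<or> u = Suc v) \<longrightarrow> \<alpha> u \<noteq> \<alpha> v) \<longleftrightarrow> (\<forall>i. Suc i < n \<longrightarrow> \<alpha> i \<noteq> \<alpha> (Suc i))"
    by (metis Suc_lessD)
  then show ?thesis unfolding L_colouring_def path_verts_def path_adj_def by auto
qed

lemma freeI: "s \<in> L v \<Longrightarrow> s \<noteq> \<alpha> v \<Longrightarrow> (0 < v \<Longrightarrow> \<alpha> (v-1) \<noteq> s) \<Longrightarrow> (Suc v < n \<Longrightarrow> \<alpha> (Suc v) \<noteq> s)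
  \<Longrightarrow> free n L \<alpha> v"
  unfolding free_def by auto

lemma freeE: "free n L \<alpha> v \<Longrightarrow> (\<And>s. s \<in> L v \<Longrightarrow> s \<noteq> \<alpha> v \<Longrightarrow> (0 < v \<longrightarrow> \<alpha> (v-1) \<noteq> s) \<Longrightarrow> (Suc v < n \<longrightarrow> \<alpha> (Suc v) \<noteq> s) \<Longrightarrow> P) \<Longrightarrow> P"
  unfolding free_def by auto

lemma nb_iff: "v < n \<Longrightarrow> (\<exists>u\<in>path_verts n. path_adj n v u \<and> \<alpha> u = c) \<longleftrightarrow> ((Suc v < n \<and> \<alpha> (Suc v) = c) \<or> (0 < v \<and> \<alpha> (v-1) = c))"
  unfolding path_verts_def path_adj_def
  apply (rule iffI)
   apply (elim bexE conjE disjE; simp)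
  apply (elim disjE conjE)
   apply (rule bexI[where x="Suc v"]; simp)
  apply (rule bexI[where x="v - 1"]; simp)
  done

lemma free_iff: "v < n \<Longrightarrow> \<not> frozen (path_verts n) (path_adj n) L \<alpha> v \<longleftrightarrow> free n L \<alpha> v"
  unfolding frozen_def free_def using nb_iff[of v n \<alpha>] by blast

lemma degree_eq: "v < n \<Longrightarrow> degree (path_verts n) (path_adj n) v = dg n v"
proof -
  assume v: "v < n"
  have "{u \<in> path_verts n. path_adj n v u} = (if Suc v < n then {Suc v} else {}) \<union> (if 0 < v then {v - 1} else {})"
    using v unfolding path_verts_def path_adj_def by auto
  then show ?thesis unfolding degree_def dg_def by auto
qed

lemma rc_refl: "Rc n L \<alpha> \<alpha>"
  unfolding reconf_def by simp

lemma rc_trans: "Rc n L \<alpha> \<beta> \<Longrightarrow> Rc n L \<beta> \<gamma> \<Longrightarrow> Rc n L \<alpha> \<gamma>"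
  unfolding reconf_def by (rule rtranclp_trans)

lemma step_sym: "recolour_step V E L \<alpha> \<beta> \<Longrightarrow> recolour_step V E L \<beta> \<alpha>"
  unfolding recolour_step_def by metis

lemma reconf_sym: "reconf V E L \<alpha> \<beta> \<Longrightarrow> reconf V E L \<beta> \<alpha>"
  unfolding reconf_def
proof (induction rule: rtranclp_induct)
  case base
  then show ?case by simp
next
  case (step y z)
  then show ?case using step_sym
    by (metis converse_rtranclp_into_rtranclp)
qed

lemma rc_sym: "Rc n L \<alpha> \<beta> \<Longrightarrow> Rc n L \<beta> \<alpha>"
  by (rule reconf_sym)

lemma rc_step: "Col n L \<alpha> \<Longrightarrow> Col n L \<beta> \<Longrightarrow> v < n \<Longrightarrow> (\<forall>u<n. u \<noteq> v \<longrightarrow> \<alpha> u = \<beta> u) \<Longrightarrow> Rc n L \<alpha> \<beta>"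
  unfolding reconf_def
  apply (rule r_into_rtranclp)
  unfolding recolour_step_def path_verts_def by (auto intro!: bexI[where x=v])

lemma col_upd: "Col n L \<alpha> \<Longrightarrow> v < n \<Longrightarrow> c \<in> L v \<Longrightarrow> (0 < v \<longrightarrow> \<alpha> (v-1) \<noteq> c) \<Longrightarrow> (Suc v < n \<longrightarrow> \<alpha> (Suc v) \<noteq> c)
   \<Longrightarrow> Col n L (\<alpha>(v := c))"
  unfolding Col_iff
  by (metis Suc_lessD diff_Suc_1 fun_upd_apply zero_less_Suc)

lemma rc_upd: "Col n L \<alpha> \<Longrightarrow> v < n \<Longrightarrow> c \<in> L v \<Longrightarrow> (0 < v \<longrightarrow> \<alpha> (v-1) \<noteq> c) \<Longrightarrow> (Suc v < n \<longrightarrow> \<alpha> (Suc v) \<noteq> c)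
   \<Longrightarrow> Rc n L \<alpha> (\<alpha>(v := c))"
  by (rule rc_step[where v=v]) (auto intro: col_upd)

lemma reconf_col: "reconf V E L \<alpha> \<beta> \<Longrightarrow> L_colouring V E L \<alpha> \<Longrightarrow> L_colouring V E L \<beta>"
  unfolding reconf_def
  by (induction rule: rtranclp_induct) (auto simp: recolour_step_def)

lemma rc_agree: "Col n L \<alpha> \<Longrightarrow> 0 < n \<Longrightarrow> (\<forall>v<n. \<alpha> v = \<beta> v) \<Longrightarrow> Rc n L \<alpha> \<beta>"
  apply (rule rc_step[where v=0])
  apply (auto simp: Col_iff)
  done

abbreviation "Lr L k c \<equiv> L(k := L k - {c})"

lemma lift_col: "Col (Suc k) (Lr L k c) \<gamma> \<Longrightarrow> c \<in> L (Suc k) \<Longrightarrow> Col (Suc (Suc k)) L (\<gamma>(Suc k := c))"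
proof -
  assume a: "Col (Suc k) (Lr L k c) \<gamma>" and c: "c \<in> L (Suc k)"
  have a1: "\<forall>v<Suc k. \<gamma> v \<in> (Lr L k c) v" and a2: "\<forall>i. Suc i < Suc k \<longrightarrow> \<gamma> i \<noteq> \<gamma> (Suc i)"
    using a unfolding Col_iff by auto
  have "\<forall>v<Suc (Suc k). (\<gamma>(Suc k := c)) v \<in> L v"
  proof (intro allI impI)
    fix v assume "v < Suc (Suc k)"
    then consider "v < Suc k" | "v = Suc k" by linarith
    then show "(\<gamma>(Suc k := c)) v \<in> L v"
    proof cases
      case 1 then show ?thesis using a1 by (cases "v = k") auto
    qed (simp add: c)
  qed
  moreover have "\<forall>i. Suc i < Suc (Suc k) \<longrightarrow> (\<gamma>(Suc k := c)) i \<noteq> (\<gamma>(Suc k := c)) (Suc i)"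
  proof (intro allI impI)
    fix i assume "Suc i < Suc (Suc k)"
    then consider "Suc i < Suc k" | "i = k" by linarith
    then show "(\<gamma>(Suc k := c)) i \<noteq> (\<gamma>(Suc k := c)) (Suc i)"
    proof cases
      case 1 then show ?thesis using a2 by simp
    next
      case 2 then show ?thesis using a1 by auto
    qed
  qed
  ultimately show ?thesis unfolding Col_iff by blast
qed

lemma restrict_col: "Col (Suc (Suc k)) L \<gamma> \<Longrightarrow> \<gamma> (Suc k) = c \<Longrightarrow> Col (Suc k) (Lr L k c) \<gamma>"
  unfolding Col_iff by auto

lemma lift_step: "recolour_step (path_verts (Suc k)) (path_adj (Suc k)) (Lr L k c) \<gamma> \<delta> \<Longrightarrow> c \<in> L (Suc k)
  \<Longrightarrow> recolour_step (path_verts (Suc (Suc k))) (path_adj (Suc (Suc k))) L (\<gamma>(Suc k := c)) (\<delta>(Suc k := c))"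
proof -
  assume st: "recolour_step (path_verts (Suc k)) (path_adj (Suc k)) (Lr L k c) \<gamma> \<delta>" and c: "c \<in> L (Suc k)"
  then have g: "Col (Suc k) (Lr L k c) \<gamma>" and d: "Col (Suc k) (Lr L k c) \<delta>"
    and ex: "\<exists>v\<in>path_verts (Suc k). \<forall>u\<in>path_verts (Suc k) - {v}. \<gamma> u = \<delta> u"
    unfolding recolour_step_def by auto
  from ex obtain v where v: "v < Suc k" and agr: "\<forall>u<Suc k. u \<noteq> v \<longrightarrow> \<gamma> u = \<delta> u"
    unfolding path_verts_def by auto
  have "\<forall>u\<in>path_verts (Suc (Suc k)) - {v}. (\<gamma>(Suc k := c)) u = (\<delta>(Suc k := c)) u"
    using agr less_Suc_eq by (auto simp: path_verts_def)
  moreover have "v \<in> path_verts (Suc (Suc k))" using v by (simp add: path_verts_def)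
  ultimately show ?thesis unfolding recolour_step_def
    using lift_col[OF g c] lift_col[OF d c] by blast
qed

lemma lift_rc: "Rc (Suc k) (Lr L k c) \<gamma> \<delta> \<Longrightarrow> c \<in> L (Suc k) \<Longrightarrow> Rc (Suc (Suc k)) L (\<gamma>(Suc k := c)) (\<delta>(Suc k := c))"
  unfolding reconf_def
proof (induction rule: rtranclp_induct)
  case base
  then show ?case by simp
next
  case (step y z)
  then show ?case using lift_step by (metis rtranclp.rtrancl_into_rtrancl)
qed

lemma lift_rc': "Rc (Suc k) (Lr L k c) \<gamma> \<delta> \<Longrightarrow> c \<in> L (Suc k) \<Longrightarrow> \<gamma> (Suc k) = c \<Longrightarrow> \<delta> (Suc k) = c
   \<Longrightarrow> Rc (Suc (Suc k)) L \<gamma> \<delta>"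
  using lift_rc by (metis fun_upd_triv)

lemma restrict_free: "free (Suc (Suc k)) L \<gamma> v \<Longrightarrow> v \<le> k \<Longrightarrow> \<gamma> (Suc k) = c \<Longrightarrow> free (Suc k) (Lr L k c) \<gamma> v"
proof -
  assume f: "free (Suc (Suc k)) L \<gamma> v" and v: "v \<le> k" and c: "\<gamma> (Suc k) = c"
  then obtain s where s: "s \<in> L v" "s \<noteq> \<gamma> v" "0 < v \<longrightarrow> \<gamma> (v-1) \<noteq> s" "Suc v < Suc (Suc k) \<longrightarrow> \<gamma> (Suc v) \<noteq> s"
    unfolding free_def by blast
  have "s \<in> (Lr L k c) v"
  proof (cases "v = k")
    case True
    then have "s \<noteq> c" using s(4) c by auto
    then show ?thesis using True s(1) by simp
  next
    case False then show ?thesis using s(1) by simp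
  qed
  then show ?thesis unfolding free_def using s v by auto
qed



lemma step_iso:
  assumes fV: "\<forall>x\<in>V. f x \<in> V" and sur: "\<forall>y\<in>V. \<exists>x\<in>V. f x = y" and inj: "inj_on f V"
    and fE: "\<forall>x\<in>V. \<forall>y\<in>V. E (f x) (f y) = E x y"
    and st: "recolour_step V E L \<alpha> \<beta>"
  shows "recolour_step V E (L \<circ> f) (\<alpha> \<circ> f) (\<beta> \<circ> f)"
proof -
  have col: "L_colouring V E (L \<circ> f) (\<phi> \<circ> f)" if "L_colouring V E L \<phi>" for \<phi>
    using that fV fE unfolding L_colouring_def by auto
  from st obtain v where v: "v \<in> V" and agr: "\<forall>u\<in>V - {v}. \<alpha> u = \<beta> u"
    unfolding recolour_step_def by auto
  from sur v obtain x where x: "x \<in> V" "f x = v" by blast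
  have "\<forall>u\<in>V - {x}. (\<alpha> \<circ> f) u = (\<beta> \<circ> f) u"
  proof
    fix u assume u: "u \<in> V - {x}"
    then have "f u \<noteq> v" using inj x inj_on_def by (metis DiffE insertI1)
    then show "(\<alpha> \<circ> f) u = (\<beta> \<circ> f) u" using agr fV u by auto
  qed
  then show ?thesis using st col x unfolding recolour_step_def by blast
qed

lemma reconf_iso:
  assumes fV: "\<forall>x\<in>V. f x \<in> V" and sur: "\<forall>y\<in>V. \<exists>x\<in>V. f x = y" and inj: "inj_on f V"
    and fE: "\<forall>x\<in>V. \<forall>y\<in>V. E (f x) (f y) = E x y"
    and r: "reconf V E L \<alpha> \<beta>"
  shows "reconf V E (L \<circ> f) (\<alpha> \<circ> f) (\<beta> \<circ> f)"
  using r unfolding reconf_def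
proof (induction rule: rtranclp_induct)
  case base then show ?case by simp
next
  case (step y z)
  then show ?case using step_iso[OF fV sur inj fE] rtranclp.rtrancl_into_rtrancl by metis
qed

definition rv :: "nat \<Rightarrow> nat \<Rightarrow> nat" where "rv n i = n - 1 - i"

lemma rv_props1: "\<forall>x\<in>path_verts n. rv n x \<in> path_verts n"
  unfolding rv_def path_verts_def by auto
lemma rv_props2: "\<forall>y\<in>path_verts n. \<exists>x\<in>path_verts n. rv n x = y"
proof
  fix y assume "y \<in> path_verts n"
  then have "y < n" by (simp add: path_verts_def)
  then show "\<exists>x\<in>path_verts n. rv n x = y"
    by (intro bexI[where x="n - 1 - y"]) (auto simp: rv_def path_verts_def)
qed
lemma rv_props3: "inj_on (rv n) (path_verts n)"
  unfolding inj_on_def rv_def path_verts_def by auto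
lemma rv_props4: "\<forall>x\<in>path_verts n. \<forall>y\<in>path_verts n. path_adj n (rv n x) (rv n y) = path_adj n x y"
  unfolding rv_def path_verts_def path_adj_def by auto
lemmas rv_props = rv_props1 rv_props2 rv_props3 rv_props4

lemma rc_rev: "Rc n L \<alpha> \<beta> \<Longrightarrow> Rc n (L \<circ> rv n) (\<alpha> \<circ> rv n) (\<beta> \<circ> rv n)"
  using reconf_iso[OF rv_props] by blast

lemma rv_rv: "v < n \<Longrightarrow> rv n (rv n v) = v" unfolding rv_def by auto
lemma rv_lt: "v < n \<Longrightarrow> rv n v < n" unfolding rv_def by auto

lemma col_rev: "Col n L \<alpha> \<Longrightarrow> Col n (L \<circ> rv n) (\<alpha> \<circ> rv n)"
  unfolding L_colouring_def using rv_props(1,4)[of n] by auto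

lemma reconf_congL: "(\<forall>v\<in>V. L v = L' v) \<Longrightarrow> reconf V E L \<alpha> \<beta> \<Longrightarrow> reconf V E L' \<alpha> \<beta>"
proof -
  assume eq: "\<forall>v\<in>V. L v = L' v"
  have "recolour_step V E L = recolour_step V E L'"
    using eq unfolding recolour_step_def L_colouring_def by (intro ext) auto
  then show "reconf V E L \<alpha> \<beta> \<Longrightarrow> reconf V E L' \<alpha> \<beta>" unfolding reconf_def by simp
qed

lemma rc_unrev: assumes "Rc n (L \<circ> rv n) (\<alpha> \<circ> rv n) (\<beta> \<circ> rv n)" "Col n L \<alpha>" "0 < n"
  shows "Rc n L \<alpha> \<beta>"
proof -
  have r: "Rc n (L \<circ> rv n \<circ> rv n) (\<alpha> \<circ> rv n \<circ> rv n) (\<beta> \<circ> rv n \<circ> rv n)"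
    using rc_rev[OF assms(1)] .
  have r2: "Rc n L (\<alpha> \<circ> rv n \<circ> rv n) (\<beta> \<circ> rv n \<circ> rv n)"
    by (rule reconf_congL[OF _ r]) (auto simp: path_verts_def rv_rv)
  have eqa: "\<forall>v<n. (\<alpha> \<circ> rv n \<circ> rv n) v = \<alpha> v" by (simp add: rv_rv)
  have ca: "Col n L (\<alpha> \<circ> rv n \<circ> rv n)"
    using assms(2) eqa unfolding Col_iff by (metis Suc_lessD)
  have cb: "Col n L (\<beta> \<circ> rv n \<circ> rv n)" using reconf_col[OF r2 ca] .
  have "Rc n L \<alpha> (\<alpha> \<circ> rv n \<circ> rv n)" using rc_agree[OF assms(2) assms(3)] eqa by simp
  moreover have "Rc n L (\<beta> \<circ> rv n \<circ> rv n) \<beta>" using rc_agree[OF cb assms(3)] by (simp add: rv_rv)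
  ultimately show ?thesis using r2 rc_trans by blast
qed

lemma dg_rev: "v < n \<Longrightarrow> dg n (rv n v) = dg n v"
proof -
  assume v: "v < n"
  have "0 < n - 1 - v \<longleftrightarrow> Suc v < n" using v by arith
  moreover have "Suc (n - 1 - v) < n \<longleftrightarrow> 0 < v" using v by arith
  ultimately show ?thesis unfolding dg_def rv_def by simp
qed

lemma free_rev: "v < n \<Longrightarrow> free n L \<alpha> (rv n v) \<Longrightarrow> free n (L \<circ> rv n) (\<alpha> \<circ> rv n) v"
proof -
  assume v: "v < n" and f: "free n L \<alpha> (rv n v)"
  have a1: "0 < v \<Longrightarrow> rv n (v - 1) = Suc (rv n v) \<and> Suc (rv n v) < n" using v unfolding rv_def by (simp, linarith)
  have a2: "Suc v < n \<Longrightarrow> rv n (Suc v) = rv n v - 1 \<and> 0 < rv n v" using v unfolding rv_def by simp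
  from f obtain s where s: "s \<in> L (rv n v)" "s \<noteq> \<alpha> (rv n v)" "0 < rv n v \<longrightarrow> \<alpha> (rv n v - 1) \<noteq> s"
     "Suc (rv n v) < n \<longrightarrow> \<alpha> (Suc (rv n v)) \<noteq> s" by (rule freeE)
  have "s \<in> (L \<circ> rv n) v" using s(1) by simp
  moreover have "s \<noteq> (\<alpha> \<circ> rv n) v" using s(2) by simp
  moreover have "0 < v \<longrightarrow> (\<alpha> \<circ> rv n) (v - 1) \<noteq> s"
  proof
    assume "0 < v" then have "rv n (v - 1) = Suc (rv n v)" "Suc (rv n v) < n" using a1 by blast+
    then show "(\<alpha> \<circ> rv n) (v - 1) \<noteq> s" using s(4) by simp
  qed
  moreover have "Suc v < n \<longrightarrow> (\<alpha> \<circ> rv n) (Suc v) \<noteq> s"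
  proof
    assume "Suc v < n" then have "rv n (Suc v) = rv n v - 1" "0 < rv n v" using a2 by blast+
    then show "(\<alpha> \<circ> rv n) (Suc v) \<noteq> s" using s(3) by simp
  qed
  ultimately show ?thesis by (intro freeI[where s=s]) auto
qed

lemma free_unrev: "v < n \<Longrightarrow> free n (L \<circ> rv n) (\<alpha> \<circ> rv n) (rv n v) \<Longrightarrow> free n L \<alpha> v"
proof -
  assume v: "v < n" and f: "free n (L \<circ> rv n) (\<alpha> \<circ> rv n) (rv n v)"
  have "free n (L \<circ> rv n \<circ> rv n) (\<alpha> \<circ> rv n \<circ> rv n) v" using free_rev[OF v f] by (simp add: comp_assoc)
  moreover have "\<And>u. u < n \<Longrightarrow> (L \<circ> rv n \<circ> rv n) u = L u" "\<And>u. u < n \<Longrightarrow> (\<alpha> \<circ> rv n \<circ> rv n) u = \<alpha> u"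
    by (auto simp: rv_rv)
  ultimately show ?thesis unfolding free_def
    by (metis Suc_lessD diff_less less_trans v zero_less_one)
qed



lemma pick: "finite B \<Longrightarrow> card B < card A \<Longrightarrow> \<exists>d\<in>A. d \<notin> B"
  by (meson card_mono not_le subsetI)

lemma fin_of_card: "card A \<ge> 1 \<Longrightarrow> finite A"
  using card.infinite by fastforce

lemma avail_rich:
  assumes "card (L v) \<ge> dg n v + 2"
  shows "\<exists>d\<in>L v. d \<noteq> c \<and> (0 < v \<longrightarrow> \<alpha> (v-1) \<noteq> d) \<and> (Suc v < n \<longrightarrow> \<alpha> (Suc v) \<noteq> d)"
proof -
  define B where "B = {c} \<union> (if 0 < v then {\<alpha> (v-1)} else {}) \<union> (if Suc v < n then {\<alpha> (Suc v)} else {})"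
  have fB: "finite B" unfolding B_def by auto
  have "card B \<le> card ({c} \<union> (if 0 < v then {\<alpha> (v-1)} else {})) + card (if Suc v < n then {\<alpha> (Suc v)} else {})"
    unfolding B_def by (rule card_Un_le)
  moreover have "card ({c} \<union> (if 0 < v then {\<alpha> (v-1)} else {})) \<le> card {c} + card (if 0 < v then {\<alpha> (v-1)} else {})"
    by (rule card_Un_le)
  ultimately have "card B \<le> 1 + dg n v" unfolding dg_def by (simp split: if_splits)
  then have "card B < card (L v)" using assms by linarith
  then obtain d where "d \<in> L v" "d \<notin> B" using pick[OF fB] by blast
  then show ?thesis unfolding B_def by (intro bexI[where x=d]) auto
qed

lemma avail_right:
  assumes "card (L v) \<ge> dg n v + 1" "0 < v"
  shows "\<exists>d\<in>L v. d \<noteq> c \<and> (Suc v < n \<longrightarrow> \<alpha> (Suc v) \<noteq> d)"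
proof -
  define B where "B = {c} \<union> (if Suc v < n then {\<alpha> (Suc v)} else {})"
  have fB: "finite B" unfolding B_def by auto
  have "card B \<le> card {c} + card (if Suc v < n then {\<alpha> (Suc v)} else {})"
    unfolding B_def by (rule card_Un_le)
  then have "card B \<le> dg n v" unfolding dg_def using assms(2) by (simp split: if_splits)
  then have "card B < card (L v)" using assms by linarith
  then obtain d where "d \<in> L v" "d \<notin> B" using pick[OF fB] by blast
  then show ?thesis unfolding B_def by (intro bexI[where x=d]) auto
qed

lemma F_left:
  assumes L: "\<forall>v<n. card (L v) \<ge> dg n v + 1" and r: "card (L r) \<ge> dg n r + 2"
  shows "r + j < n \<Longrightarrow> Col n L \<alpha> \<Longrightarrow>
    \<exists>\<alpha>'. Rc n L \<alpha> \<alpha>' \<and> Col n L \<alpha>' \<and> \<alpha>' (r+j) \<noteq> c \<and> (\<forall>v. r+j < v \<longrightarrow> v < n \<longrightarrow> \<alpha>' v = \<alpha> v)"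
proof (induction j arbitrary: \<alpha> c)
  case 0
  show ?case
  proof (cases "\<alpha> r = c")
    case False
    then show ?thesis using 0 rc_refl by auto
  next
    case True
    obtain d where d: "d \<in> L r" "d \<noteq> c" "0 < r \<longrightarrow> \<alpha> (r-1) \<noteq> d" "Suc r < n \<longrightarrow> \<alpha> (Suc r) \<noteq> d"
      using avail_rich[of n r L c \<alpha>] r by blast
    have rn: "r < n" and ca: "Col n L \<alpha>" using 0 by simp_all
    have R: "Rc n L \<alpha> (\<alpha>(r := d))" by (rule rc_upd[OF ca rn d(1) d(3) d(4)])
    have C: "Col n L (\<alpha>(r := d))" by (rule col_upd[OF ca rn d(1) d(3) d(4)])
    have A: "\<forall>v. r + 0 < v \<longrightarrow> v < n \<longrightarrow> (\<alpha>(r := d)) v = \<alpha> v" by simp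
    have B: "(\<alpha>(r := d)) (r + 0) \<noteq> c" using d by simp
    show ?thesis by (rule exI[where x="\<alpha>(r := d)"]) (intro conjI R C A B)
  qed
next
  case (Suc j)
  define k where "k = Suc (r + j)"
  have k: "k < n" "r + Suc j = k" using Suc.prems unfolding k_def by auto
  show ?case
  proof (cases "\<alpha> k = c")
    case False
    then show ?thesis using Suc.prems rc_refl k by auto
  next
    case True
    obtain e where e: "e \<in> L k" "e \<noteq> c" "Suc k < n \<longrightarrow> \<alpha> (Suc k) \<noteq> e"
      using avail_right[of n k L c \<alpha>] L k unfolding k_def by auto
    obtain \<alpha>1 where a1: "Rc n L \<alpha> \<alpha>1" "Col n L \<alpha>1" "\<alpha>1 (r+j) \<noteq> e" "\<forall>v. r+j < v \<longrightarrow> v < n \<longrightarrow> \<alpha>1 v = \<alpha> v"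
      using Suc.IH[of \<alpha> e] Suc.prems by auto
    have km: "k - 1 = r + j" unfolding k_def by simp
    have c1: "0 < k \<longrightarrow> \<alpha>1 (k-1) \<noteq> e" using a1(3) km by simp
    have c2: "Suc k < n \<longrightarrow> \<alpha>1 (Suc k) \<noteq> e" using e(3) a1(4) unfolding k_def by auto
    have "Rc n L \<alpha>1 (\<alpha>1(k := e))" using rc_upd[OF a1(2) k(1) e(1)] c1 c2 by blast
    then have R: "Rc n L \<alpha> (\<alpha>1(k := e))" using a1(1) rc_trans by blast
    have C: "Col n L (\<alpha>1(k := e))" using col_upd[OF a1(2) k(1) e(1)] c1 c2 by blast
    have A: "\<forall>v. r + Suc j < v \<longrightarrow> v < n \<longrightarrow> (\<alpha>1(k := e)) v = \<alpha> v" using a1(4) unfolding k_def by auto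
    have B: "(\<alpha>1(k := e)) (r + Suc j) \<noteq> c" using e(2) k(2) by simp
    show ?thesis by (rule exI[where x="\<alpha>1(k := e)"]) (intro conjI R C A B)
  qed
qed

lemma dg_lt: "v < k \<Longrightarrow> dg (Suc k) v = dg (Suc (Suc k)) v"
  unfolding dg_def by simp

lemma dg_k: "dg (Suc (Suc k)) k = Suc (dg (Suc k) k)"
  unfolding dg_def by simp

lemma card_minus1: "card (A - {c}) \<ge> card A - 1"
  by (simp add: card_Diff_singleton_if)

lemma reduce_ok:
  assumes "\<forall>v<Suc (Suc k). card (L v) \<ge> dg (Suc (Suc k)) v + 1"
  shows "\<forall>v<Suc k. card (Lr L k c v) \<ge> dg (Suc k) v + 1"
proof (intro allI impI)
  fix v assume v: "v < Suc k"
  show "card (Lr L k c v) \<ge> dg (Suc k) v + 1"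
  proof (cases "v = k")
    case True
    have "card (L k) \<ge> dg (Suc (Suc k)) k + 1" using assms by simp
    then show ?thesis using True card_minus1[of "L k" c] dg_k[of k] by simp
  next
    case False
    then have "v < k" using v by simp
    then show ?thesis using assms dg_lt[of v k] by simp
  qed
qed

lemma reduce_rich:
  assumes "r \<le> k" "card (L r) \<ge> dg (Suc (Suc k)) r + 2"
  shows "card (Lr L k c r) \<ge> dg (Suc k) r + 2"
proof (cases "r = k")
  case True
  then show ?thesis using assms card_minus1[of "L k" c] dg_k[of k] by simp
next
  case False
  then have "r < k" using assms by simp
  then show ?thesis using assms dg_lt[of r k] by simp
qed

lemma FC1_step:
  fixes L :: "nat \<Rightarrow> 'c set"
  assumes IH: "\<And>(L' :: nat \<Rightarrow> 'c set) r' (\<alpha>' :: nat \<Rightarrow> 'c) \<beta>'. \<forall>v<Suc k. card (L' v) \<ge> dg (Suc k) v + 1 \<Longrightarrow> r' < Suc k \<Longrightarrow> card (L' r') \<ge> dg (Suc k) r' + 2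
      \<Longrightarrow> Col (Suc k) L' \<alpha>' \<Longrightarrow> Col (Suc k) L' \<beta>' \<Longrightarrow> Rc (Suc k) L' \<alpha>' \<beta>'"
    and L: "\<forall>v<Suc (Suc k). card (L v) \<ge> dg (Suc (Suc k)) v + 1"
    and r: "r \<le> k" "card (L r) \<ge> dg (Suc (Suc k)) r + 2"
    and ca: "Col (Suc (Suc k)) L \<alpha>" and cb: "Col (Suc (Suc k)) L \<beta>"
  shows "Rc (Suc (Suc k)) L \<alpha> \<beta>"
proof -
  define c where "c = \<beta> (Suc k)"
  have cL: "c \<in> L (Suc k)" using cb unfolding c_def Col_iff by simp
  have rk: "r + (k - r) < Suc (Suc k)" using r by simp
  obtain \<alpha>1 where a1: "Rc (Suc (Suc k)) L \<alpha> \<alpha>1" "Col (Suc (Suc k)) L \<alpha>1" "\<alpha>1 (r + (k - r)) \<noteq> c"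
    using F_left[OF L r(2) rk ca, of c] by blast
  have a1k: "\<alpha>1 k \<noteq> c" using a1(3) r by simp
  have sk: "Suc k < Suc (Suc k)" by simp
  have c1: "0 < Suc k \<longrightarrow> \<alpha>1 (Suc k - 1) \<noteq> c" using a1k by simp
  have c2: "Suc (Suc k) < Suc (Suc k) \<longrightarrow> \<alpha>1 (Suc (Suc k)) \<noteq> c" by simp
  define \<alpha>2 where "\<alpha>2 = \<alpha>1(Suc k := c)"
  have R2: "Rc (Suc (Suc k)) L \<alpha>1 \<alpha>2" unfolding \<alpha>2_def by (rule rc_upd[OF a1(2) sk cL c1 c2])
  have C2: "Col (Suc (Suc k)) L \<alpha>2" unfolding \<alpha>2_def by (rule col_upd[OF a1(2) sk cL c1 c2])
  have a2w: "\<alpha>2 (Suc k) = c" unfolding \<alpha>2_def by simp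
  have C2': "Col (Suc k) (Lr L k c) \<alpha>2" by (rule restrict_col[OF C2 a2w])
  have Cb': "Col (Suc k) (Lr L k c) \<beta>" by (rule restrict_col[OF cb]) (simp add: c_def)
  have "Rc (Suc k) (Lr L k c) \<alpha>2 \<beta>"
    by (rule IH[OF reduce_ok[OF L, of c] _ reduce_rich[of r k L c, OF r(1) r(2)] C2' Cb']) (use r in simp)
  then have "Rc (Suc (Suc k)) L \<alpha>2 \<beta>" by (rule lift_rc'[of k L c \<alpha>2 \<beta>, OF _ cL a2w]) (simp add: c_def)
  then show ?thesis using a1(1) R2 rc_trans by blast
qed

lemma rc_one: "Col (Suc 0) L \<alpha> \<Longrightarrow> Col (Suc 0) L \<beta> \<Longrightarrow> Rc (Suc 0) L \<alpha> \<beta>"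
  by (rule rc_step[where v=0]) auto

lemma FC1:
  "\<forall>v<n. card (L v) \<ge> dg n v + 1 \<Longrightarrow> r < n \<Longrightarrow> card (L r) \<ge> dg n r + 2
   \<Longrightarrow> Col n L \<alpha> \<Longrightarrow> Col n L \<beta> \<Longrightarrow> Rc n L \<alpha> \<beta>"
proof (induction n arbitrary: L r \<alpha> \<beta>)
  case 0
  then show ?case by simp
next
  case (Suc m)
  show ?case
  proof (cases m)
    case 0
    have "Col (Suc 0) L \<alpha>" "Col (Suc 0) L \<beta>" using Suc.prems(4,5) 0 by simp_all
    then have "Rc (Suc 0) L \<alpha> \<beta>" by (rule rc_one)
    then show ?thesis using 0 by simp
  next
    case (Suc k)
    note IH = Suc.IH[unfolded Suc]
    note P = Suc.prems[unfolded Suc]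
    show ?thesis unfolding Suc
    proof (cases "r \<le> k")
      case True
      show "Rc (Suc (Suc k)) L \<alpha> \<beta>" by (rule FC1_step[OF IH P(1) True P(3) P(4) P(5)])
    next
      case False
      then have rr: "r = Suc k" using P(2) by simp
      define n where "n = Suc (Suc k)"
      have L': "\<forall>v<n. card ((L \<circ> rv n) v) \<ge> dg n v + 1"
        using P(1) unfolding n_def by (metis comp_apply dg_rev rv_lt)
      have r0: "rv n 0 = r" unfolding n_def rv_def rr by simp
      have r': "card ((L \<circ> rv n) 0) \<ge> dg n 0 + 2"
        using P(3) r0 dg_rev[of 0 n] unfolding n_def by simp
      have "Rc n (L \<circ> rv n) (\<alpha> \<circ> rv n) (\<beta> \<circ> rv n)"
        unfolding n_def
        by (rule FC1_step[OF IH L'[unfolded n_def] le0 r'[unfolded n_def] col_rev[OF P(4)] col_rev[OF P(5)]])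
      then show "Rc (Suc (Suc k)) L \<alpha> \<beta>" using rc_unrev[OF _ P(4)] unfolding n_def by simp
    qed
  qed
qed



lemma FC2:
  fixes L :: "nat \<Rightarrow> 'c set"
  assumes L: "\<forall>v<Suc (Suc k). card (L v) \<ge> dg (Suc (Suc k)) v + 1"
    and p: "p \<in> L (Suc k)" "p \<notin> L k"
    and ca: "Col (Suc (Suc k)) L \<alpha>" and cb: "Col (Suc (Suc k)) L \<beta>"
  shows "Rc (Suc (Suc k)) L \<alpha> \<beta>"
proof -
  have sk: "Suc k < Suc (Suc k)" by simp
  have ak: "\<alpha> k \<noteq> p" using ca p(2) unfolding Col_iff by auto
  have bk: "\<beta> k \<noteq> p" using cb p(2) unfolding Col_iff by auto
  have c1: "0 < Suc k \<longrightarrow> \<alpha> (Suc k - 1) \<noteq> p" using ak by simp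
  have d1: "0 < Suc k \<longrightarrow> \<beta> (Suc k - 1) \<noteq> p" using bk by simp
  have c2: "Suc (Suc k) < Suc (Suc k) \<longrightarrow> \<alpha> (Suc (Suc k)) \<noteq> p" by simp
  have d2: "Suc (Suc k) < Suc (Suc k) \<longrightarrow> \<beta> (Suc (Suc k)) \<noteq> p" by simp
  have R1: "Rc (Suc (Suc k)) L \<alpha> (\<alpha>(Suc k := p))" by (rule rc_upd[OF ca sk p(1) c1 c2])
  have C1: "Col (Suc (Suc k)) L (\<alpha>(Suc k := p))" by (rule col_upd[OF ca sk p(1) c1 c2])
  have R2: "Rc (Suc (Suc k)) L \<beta> (\<beta>(Suc k := p))" by (rule rc_upd[OF cb sk p(1) d1 d2])
  have C2: "Col (Suc (Suc k)) L (\<beta>(Suc k := p))" by (rule col_upd[OF cb sk p(1) d1 d2])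
  have C1': "Col (Suc k) (Lr L k p) (\<alpha>(Suc k := p))" by (rule restrict_col[OF C1]) simp
  have C2': "Col (Suc k) (Lr L k p) (\<beta>(Suc k := p))" by (rule restrict_col[OF C2]) simp
  have Lk: "card (L k) \<ge> dg (Suc (Suc k)) k + 1" using L by simp
  have rich: "card (Lr L k p k) \<ge> dg (Suc k) k + 2" using Lk p(2) dg_k[of k] by simp
  have "Rc (Suc k) (Lr L k p) (\<alpha>(Suc k := p)) (\<beta>(Suc k := p))"
    by (rule FC1[OF reduce_ok[OF L, of p] _ rich C1' C2']) simp
  then have "Rc (Suc (Suc k)) L (\<alpha>(Suc k := p)) (\<beta>(Suc k := p))"
    by (rule lift_rc'[of k L p "\<alpha>(Suc k := p)" "\<beta>(Suc k := p)", OF _ p(1)]) simp_all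
  then show ?thesis using R1 R2 rc_trans rc_sym by metis
qed

lemma FC2_left:
  fixes L :: "nat \<Rightarrow> 'c set"
  assumes L: "\<forall>v<Suc (Suc k). card (L v) \<ge> dg (Suc (Suc k)) v + 1"
    and p: "p \<in> L 0" "p \<notin> L 1"
    and ca: "Col (Suc (Suc k)) L \<alpha>" and cb: "Col (Suc (Suc k)) L \<beta>"
  shows "Rc (Suc (Suc k)) L \<alpha> \<beta>"
proof -
  define n where "n = Suc (Suc k)"
  have L': "\<forall>v<n. card ((L \<circ> rv n) v) \<ge> dg n v + 1"
    using L unfolding n_def by (metis comp_apply dg_rev rv_lt)
  have p1: "p \<in> (L \<circ> rv n) (Suc k)" using p(1) unfolding n_def rv_def by simp
  have p2: "p \<notin> (L \<circ> rv n) k" using p(2) unfolding n_def rv_def by simp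
  have "Rc n (L \<circ> rv n) (\<alpha> \<circ> rv n) (\<beta> \<circ> rv n)"
    unfolding n_def by (rule FC2[OF L'[unfolded n_def] p1[unfolded n_def] p2[unfolded n_def]
       col_rev[OF ca] col_rev[OF cb]])
  then show ?thesis using rc_unrev[OF _ ca] unfolding n_def by simp
qed

lemma not_free: "\<not> free n L \<alpha> v \<Longrightarrow> x \<in> L v \<Longrightarrow> x \<noteq> \<alpha> v \<Longrightarrow> (0 < v \<longrightarrow> \<alpha> (v-1) \<noteq> x) \<Longrightarrow> (Suc v < n \<longrightarrow> \<alpha> (Suc v) \<noteq> x) \<Longrightarrow> False"
  using freeI by metis

lemma free_step:
  assumes L: "\<forall>v<n. card (L v) \<ge> dg n v + 1"
    and ca: "Col n L \<alpha>" and f: "free n L \<alpha> i" and i: "Suc i < n"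
  shows "\<exists>\<beta>. Rc n L \<alpha> \<beta> \<and> Col n L \<beta> \<and> free n L \<beta> (Suc i) \<and> (\<forall>v. Suc i \<le> v \<longrightarrow> \<beta> v = \<alpha> v)"
proof (cases "free n L \<alpha> (Suc i)")
  case True
  then show ?thesis using ca rc_refl by blast
next
  case False
  from f obtain s where s: "s \<in> L i" "s \<noteq> \<alpha> i" "0 < i \<longrightarrow> \<alpha> (i-1) \<noteq> s" "Suc i < n \<longrightarrow> \<alpha> (Suc i) \<noteq> s"
    by (rule freeE)
  have iln: "i < n" using i by simp
  define \<beta> where "\<beta> = \<alpha>(i := s)"
  have R: "Rc n L \<alpha> \<beta>" unfolding \<beta>_def by (rule rc_upd[OF ca iln s(1) s(3) s(4)])
  have C: "Col n L \<beta>" unfolding \<beta>_def by (rule col_upd[OF ca iln s(1) s(3) s(4)])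
  define j where "j = Suc i"
  define B where "B = {\<alpha> j} \<union> (if Suc j < n then {\<alpha> (Suc j)} else {})"
  have fB: "finite B" unfolding B_def by simp
  have "card B \<le> card {\<alpha> j} + card (if Suc j < n then {\<alpha> (Suc j)} else {})"
    unfolding B_def by (rule card_Un_le)
  then have "card B \<le> 1 + (if Suc j < n then 1 else 0)" by (simp split: if_splits)
  moreover have "card (L j) \<ge> dg n j + 1" using L i unfolding j_def by simp
  moreover have "dg n j = 1 + (if Suc j < n then 1 else 0)" unfolding dg_def j_def by simp
  ultimately have "card B < card (L j)" by linarith
  then obtain x where x: "x \<in> L j" "x \<notin> B" using pick[OF fB] by blast
  have x1: "x \<noteq> \<alpha> j" and x2: "Suc j < n \<longrightarrow> \<alpha> (Suc j) \<noteq> x" using x(2) unfolding B_def by auto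
  have ai: "\<alpha> i = x"
  proof (rule ccontr)
    assume "\<alpha> i \<noteq> x"
    then have "0 < j \<longrightarrow> \<alpha> (j-1) \<noteq> x" unfolding j_def by simp
    then show False using not_free[OF False[folded j_def] x(1) x1 _ x2] by blast
  qed
  have agr: "\<forall>v. Suc i \<le> v \<longrightarrow> \<beta> v = \<alpha> v" unfolding \<beta>_def by simp
  have Fb: "free n L \<beta> (Suc i)"
  proof (rule ccontr)
    assume nf: "\<not> free n L \<beta> (Suc i)"
    have y1: "x \<noteq> \<beta> j" using x1 agr unfolding j_def by simp
    have y2: "Suc j < n \<longrightarrow> \<beta> (Suc j) \<noteq> x" using x2 agr unfolding j_def by simp
    have "\<beta> i = x"
    proof (rule ccontr)
      assume "\<beta> i \<noteq> x"
      then have "0 < j \<longrightarrow> \<beta> (j-1) \<noteq> x" unfolding j_def by simp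
      then show False using not_free[OF nf[folded j_def] x(1) y1 _ y2] by blast
    qed
    then have "s = x" unfolding \<beta>_def by simp
    then show False using ai s(2) by simp
  qed
  show ?thesis using R C Fb agr by blast
qed

lemma propagate:
  assumes L: "\<forall>v<n. card (L v) \<ge> dg n v + 1"
  shows "Col n L \<alpha> \<Longrightarrow> free n L \<alpha> i \<Longrightarrow> i + d < n \<Longrightarrow>
    \<exists>\<beta>. Rc n L \<alpha> \<beta> \<and> Col n L \<beta> \<and> free n L \<beta> (i + d) \<and> (\<forall>v. i + d \<le> v \<longrightarrow> \<beta> v = \<alpha> v)"
proof (induction d arbitrary: \<alpha> i)
  case 0
  then show ?case using rc_refl by auto
next
  case (Suc d)
  have si: "Suc i < n" using Suc.prems(3) by simp
  obtain \<beta>1 where b1: "Rc n L \<alpha> \<beta>1" "Col n L \<beta>1" "free n L \<beta>1 (Suc i)" "\<forall>v. Suc i \<le> v \<longrightarrow> \<beta>1 v = \<alpha> v"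
    using free_step[OF L Suc.prems(1) Suc.prems(2) si] by blast
  have "Suc i + d < n" using Suc.prems(3) by simp
  then obtain \<beta> where b: "Rc n L \<beta>1 \<beta>" "Col n L \<beta>" "free n L \<beta> (Suc i + d)" "\<forall>v. Suc i + d \<le> v \<longrightarrow> \<beta> v = \<beta>1 v"
    using Suc.IH[OF b1(2) b1(3)] by blast
  have "Rc n L \<alpha> \<beta>" using b1(1) b(1) rc_trans by blast
  moreover have "free n L \<beta> (i + Suc d)" using b(3) by simp
  moreover have "\<forall>v. i + Suc d \<le> v \<longrightarrow> \<beta> v = \<alpha> v" using b(4) b1(4) by simp
  ultimately show ?case using b(2) by blast
qed

lemma extend:
  shows "k \<le> n \<Longrightarrow> (\<forall>v<k. card (L v) \<ge> 2) \<Longrightarrow> (\<forall>v. k \<le> v \<longrightarrow> v < n \<longrightarrow> \<theta> v \<in> L v)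
    \<Longrightarrow> (\<forall>i. k \<le> i \<longrightarrow> Suc i < n \<longrightarrow> \<theta> i \<noteq> \<theta> (Suc i))
    \<Longrightarrow> \<exists>\<theta>'. Col n L \<theta>' \<and> (\<forall>v. k \<le> v \<longrightarrow> \<theta>' v = \<theta> v)"
proof (induction k arbitrary: \<theta>)
  case 0
  then have "Col n L \<theta>" unfolding Col_iff by auto
  then show ?case by blast
next
  case (Suc k)
  have c2: "card (L k) \<ge> 2" using Suc.prems(2) by simp
  have fB: "finite {\<theta> (Suc k)}" by simp
  have "card {\<theta> (Suc k)} < card (L k)" using c2 by simp
  then obtain a where a: "a \<in> L k" "a \<noteq> \<theta> (Suc k)" using pick[OF fB] by blast
  define \<theta>1 where "\<theta>1 = \<theta>(k := a)"
  have h1: "k \<le> n" using Suc.prems(1) by simp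
  have h2: "\<forall>v<k. card (L v) \<ge> 2" using Suc.prems(2) by simp
  have h3: "\<forall>v. k \<le> v \<longrightarrow> v < n \<longrightarrow> \<theta>1 v \<in> L v"
  proof (intro allI impI)
    fix v assume "k \<le> v" "v < n"
    then show "\<theta>1 v \<in> L v" using Suc.prems(3) a(1) unfolding \<theta>1_def by (cases "v = k") auto
  qed
  have h4: "\<forall>i. k \<le> i \<longrightarrow> Suc i < n \<longrightarrow> \<theta>1 i \<noteq> \<theta>1 (Suc i)"
  proof (intro allI impI)
    fix i assume "k \<le> i" "Suc i < n"
    then show "\<theta>1 i \<noteq> \<theta>1 (Suc i)" using Suc.prems(4) a(2) unfolding \<theta>1_def by (cases "i = k") auto
  qed
  obtain \<theta>' where t: "Col n L \<theta>'" "\<forall>v. k \<le> v \<longrightarrow> \<theta>' v = \<theta>1 v" using Suc.IH[OF h1 h2 h3 h4] by blast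
  have "\<forall>v. Suc k \<le> v \<longrightarrow> \<theta>' v = \<theta> v" using t(2) unfolding \<theta>1_def by simp
  then show ?case using t(1) by blast
qed



definition G :: "nat \<Rightarrow> (nat \<Rightarrow> 'c set) \<Rightarrow> 'c \<Rightarrow> (nat \<Rightarrow> 'c) \<Rightarrow> bool" where
  "G w L c \<gamma> \<longleftrightarrow> Col (Suc w) L \<gamma> \<and> \<gamma> w = c \<and> (\<exists>v<w. free (Suc w) L \<gamma> v)"

lemma G_intro: "Col (Suc w) L \<gamma> \<Longrightarrow> \<gamma> w = c \<Longrightarrow> v < w \<Longrightarrow> free (Suc w) L \<gamma> v \<Longrightarrow> G w L c \<gamma>"
  unfolding G_def by blast

context
  fixes t :: nat and L :: "nat \<Rightarrow> 'c set"
  assumes Ldeg: "\<forall>v<(Suc (Suc (Suc (Suc t)))). card (L v) \<ge> dg (Suc (Suc (Suc (Suc t)))) v + 1"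
    and tight: "\<forall>v<(Suc (Suc (Suc (Suc t)))). card (L v) \<le> dg (Suc (Suc (Suc (Suc t)))) v + 1"
    and Lwu: "L (Suc (Suc (Suc t))) \<subseteq> L (Suc (Suc t))"
    and U4: "card (\<Union>v<(Suc (Suc (Suc (Suc t)))). L v) \<ge> 4"
begin

lemma fin: "v < (Suc (Suc (Suc (Suc t)))) \<Longrightarrow> finite (L v)"
proof -
  assume v: "v < (Suc (Suc (Suc (Suc t))))"
  then have "card (L v) \<ge> 1" using Ldeg by fastforce
  then show ?thesis by (rule fin_of_card)
qed

lemma card_w: "card (L (Suc (Suc (Suc t)))) = 2"
proof -
  have d: "dg (Suc (Suc (Suc (Suc t)))) (Suc (Suc (Suc t))) = 1" by (simp add: dg_def)
  have "card (L (Suc (Suc (Suc t)))) \<ge> dg (Suc (Suc (Suc (Suc t)))) (Suc (Suc (Suc t))) + 1" "card (L (Suc (Suc (Suc t)))) \<le> dg (Suc (Suc (Suc (Suc t)))) (Suc (Suc (Suc t))) + 1" using Ldeg tight by simp_all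
  then show ?thesis using d by simp
qed

lemma card_u: "card (L (Suc (Suc t))) = 3"
proof -
  have d: "dg (Suc (Suc (Suc (Suc t)))) (Suc (Suc t)) = 2" by (simp add: dg_def)
  have "card (L (Suc (Suc t))) \<ge> dg (Suc (Suc (Suc (Suc t)))) (Suc (Suc t)) + 1" "card (L (Suc (Suc t))) \<le> dg (Suc (Suc (Suc (Suc t)))) (Suc (Suc t)) + 1" using Ldeg tight by simp_all
  then show ?thesis using d by simp
qed

lemma card_m: "card (L (Suc t)) = 3"
proof -
  have d: "dg (Suc (Suc (Suc (Suc t)))) (Suc t) = 2" by (simp add: dg_def)
  have "card (L (Suc t)) \<ge> dg (Suc (Suc (Suc (Suc t)))) (Suc t) + 1" "card (L (Suc t)) \<le> dg (Suc (Suc (Suc (Suc t)))) (Suc t) + 1" using Ldeg tight by simp_all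
  then show ?thesis using d by simp
qed


lemma claim2:
  assumes ca: "Col (Suc (Suc (Suc (Suc t)))) L \<alpha>" and uf: "\<exists>v<(Suc (Suc (Suc (Suc t)))). free (Suc (Suc (Suc (Suc t)))) L \<alpha> v"
  shows "\<exists>c\<in>L (Suc (Suc (Suc t))). \<exists>\<gamma>. G (Suc (Suc (Suc t))) L c \<gamma> \<and> Rc (Suc (Suc (Suc (Suc t)))) L \<alpha> \<gamma>"
proof (cases "\<exists>v<(Suc (Suc (Suc t))). free (Suc (Suc (Suc (Suc t)))) L \<alpha> v")
  case True
  have "\<alpha> (Suc (Suc (Suc t))) \<in> L (Suc (Suc (Suc t)))" using ca unfolding Col_iff by simp
  moreover have "G (Suc (Suc (Suc t))) L (\<alpha> (Suc (Suc (Suc t)))) \<alpha>" unfolding G_def using ca True by simp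
  ultimately show ?thesis using rc_refl by blast
next
  case False
  then have fw: "free (Suc (Suc (Suc (Suc t)))) L \<alpha> (Suc (Suc (Suc t)))" using uf less_Suc_eq by blast
  from fw obtain s where s: "s \<in> L (Suc (Suc (Suc t)))" "s \<noteq> \<alpha> (Suc (Suc (Suc t)))" "0 < (Suc (Suc (Suc t))) \<longrightarrow> \<alpha> ((Suc (Suc (Suc t))) - 1) \<noteq> s"
      "Suc (Suc (Suc (Suc t))) < (Suc (Suc (Suc (Suc t)))) \<longrightarrow> \<alpha> (Suc (Suc (Suc (Suc t)))) \<noteq> s" by (rule freeE)
  have wN: "(Suc (Suc (Suc t))) < (Suc (Suc (Suc (Suc t))))" by simp
  define \<alpha>1 where "\<alpha>1 = \<alpha>((Suc (Suc (Suc t))) := s)"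
  have R: "Rc (Suc (Suc (Suc (Suc t)))) L \<alpha> \<alpha>1" unfolding \<alpha>1_def by (rule rc_upd[OF ca wN s(1) s(3) s(4)])
  have C: "Col (Suc (Suc (Suc (Suc t)))) L \<alpha>1" unfolding \<alpha>1_def by (rule col_upd[OF ca wN s(1) s(3) s(4)])
  have nfu: "\<not> free (Suc (Suc (Suc (Suc t)))) L \<alpha> (Suc (Suc t))" using False by simp
  have auw: "\<alpha> (Suc (Suc t)) \<noteq> \<alpha> (Suc (Suc (Suc t)))" using ca unfolding Col_iff by simp
  have amw: "\<alpha> (Suc t) \<noteq> \<alpha> (Suc (Suc (Suc t)))"
  proof
    assume eq: "\<alpha> (Suc t) = \<alpha> (Suc (Suc (Suc t)))"
    have fB: "finite {\<alpha> (Suc (Suc t)), \<alpha> (Suc (Suc (Suc t)))}" by simp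
    have "card {\<alpha> (Suc (Suc t)), \<alpha> (Suc (Suc (Suc t)))} < card (L (Suc (Suc t)))" using card_u by (simp add: card_insert_if)
    then obtain x where x: "x \<in> L (Suc (Suc t))" "x \<notin> {\<alpha> (Suc (Suc t)), \<alpha> (Suc (Suc (Suc t)))}" using pick[OF fB] by blast
    have "0 < (Suc (Suc t)) \<longrightarrow> \<alpha> ((Suc (Suc t)) - 1) \<noteq> x" using x(2) eq by auto
    moreover have "Suc (Suc (Suc t)) < (Suc (Suc (Suc (Suc t)))) \<longrightarrow> \<alpha> (Suc (Suc (Suc t))) \<noteq> x" using x(2) by auto
    ultimately show False using not_free[OF nfu x(1)] x(2) by blast
  qed
  have "free (Suc (Suc (Suc (Suc t)))) L \<alpha>1 (Suc (Suc t))"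
  proof (rule freeI[where s="\<alpha> (Suc (Suc (Suc t)))"])
    show "\<alpha> (Suc (Suc (Suc t))) \<in> L (Suc (Suc t))" using ca Lwu unfolding Col_iff by auto
    show "\<alpha> (Suc (Suc (Suc t))) \<noteq> \<alpha>1 (Suc (Suc t))" using auw unfolding \<alpha>1_def by simp
    show "\<alpha>1 ((Suc (Suc t)) - 1) \<noteq> \<alpha> (Suc (Suc (Suc t)))" using amw unfolding \<alpha>1_def by simp
    show "\<alpha>1 (Suc (Suc (Suc t))) \<noteq> \<alpha> (Suc (Suc (Suc t)))" using s(2) unfolding \<alpha>1_def by simp
  qed
  then have "G (Suc (Suc (Suc t))) L s \<alpha>1" unfolding G_def using C by (auto simp: \<alpha>1_def)
  then show ?thesis using R s(1) by blast
qed


lemma link_direct: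
  assumes x: "x \<in> L (Suc (Suc (Suc t)))" "x' \<in> L (Suc (Suc (Suc t)))" "x \<noteq> x'" "x \<notin> L (Suc t)" and g: "G (Suc (Suc (Suc t))) L x \<gamma>"
  shows "\<exists>\<delta>. G (Suc (Suc (Suc t))) L x' \<delta> \<and> Rc (Suc (Suc (Suc (Suc t)))) L \<gamma> \<delta>"
proof -
  have cg: "Col (Suc (Suc (Suc (Suc t)))) L \<gamma>" and gw: "\<gamma> (Suc (Suc (Suc t))) = x" using g unfolding G_def by auto
  obtain v where v: "v < (Suc (Suc (Suc t)))" "free (Suc (Suc (Suc (Suc t)))) L \<gamma> v" using g unfolding G_def by auto
  have vu: "v + ((Suc (Suc t)) - v) = (Suc (Suc t))" using v(1) by simp
  have vN: "v + ((Suc (Suc t)) - v) < (Suc (Suc (Suc (Suc t))))" using vu by simp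
  obtain \<gamma>1 where g1: "Rc (Suc (Suc (Suc (Suc t)))) L \<gamma> \<gamma>1" "Col (Suc (Suc (Suc (Suc t)))) L \<gamma>1" "free (Suc (Suc (Suc (Suc t)))) L \<gamma>1 (v + ((Suc (Suc t)) - v))"
      "\<forall>z. v + ((Suc (Suc t)) - v) \<le> z \<longrightarrow> \<gamma>1 z = \<gamma> z"
    using propagate[OF Ldeg cg v(2) vN] by blast
  have f1: "free (Suc (Suc (Suc (Suc t)))) L \<gamma>1 (Suc (Suc t))" using g1(3) vu by simp
  have g1w: "\<gamma>1 (Suc (Suc (Suc t))) = x" using g1(4) vu gw by simp
  from f1 obtain tt where tt: "tt \<in> L (Suc (Suc t))" "tt \<noteq> \<gamma>1 (Suc (Suc t))" "0 < (Suc (Suc t)) \<longrightarrow> \<gamma>1 ((Suc (Suc t)) - 1) \<noteq> tt"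
      "Suc (Suc (Suc t)) < (Suc (Suc (Suc (Suc t)))) \<longrightarrow> \<gamma>1 (Suc (Suc (Suc t))) \<noteq> tt" by (rule freeE)
  have ttx: "tt \<noteq> x" using tt(4) g1w by auto
  have g1ux: "\<gamma>1 (Suc (Suc t)) \<noteq> x" using g1(2) g1w unfolding Col_iff by auto
  have uN: "(Suc (Suc t)) < (Suc (Suc (Suc (Suc t))))" by simp
  obtain \<gamma>' where g': "Rc (Suc (Suc (Suc (Suc t)))) L \<gamma>1 \<gamma>'" "Col (Suc (Suc (Suc (Suc t)))) L \<gamma>'" "\<gamma>' (Suc (Suc (Suc t))) = x" "\<gamma>' (Suc t) = \<gamma>1 (Suc t)"
      "\<gamma>' (Suc (Suc t)) \<noteq> x" "\<gamma>' (Suc (Suc t)) \<noteq> x'"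
  proof (cases "\<gamma>1 (Suc (Suc t)) = x'")
    case False
    then show ?thesis using that[of \<gamma>1] rc_refl g1(2) g1w g1ux by blast
  next
    case True
    have R: "Rc (Suc (Suc (Suc (Suc t)))) L \<gamma>1 (\<gamma>1((Suc (Suc t)) := tt))" by (rule rc_upd[OF g1(2) uN tt(1) tt(3) tt(4)])
    have C: "Col (Suc (Suc (Suc (Suc t)))) L (\<gamma>1((Suc (Suc t)) := tt))" by (rule col_upd[OF g1(2) uN tt(1) tt(3) tt(4)])
    show ?thesis
      by (rule that[OF R C]) (use g1w ttx tt(2) True in auto)
  qed
  have wN: "(Suc (Suc (Suc t))) < (Suc (Suc (Suc (Suc t))))" by simp
  have xw: "x' \<in> L (Suc (Suc (Suc t)))" by (rule x(2))
  have h1: "0 < (Suc (Suc (Suc t))) \<longrightarrow> \<gamma>' ((Suc (Suc (Suc t))) - 1) \<noteq> x'" using g'(6) by auto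
  have h2: "Suc (Suc (Suc (Suc t))) < (Suc (Suc (Suc (Suc t)))) \<longrightarrow> \<gamma>' (Suc (Suc (Suc (Suc t)))) \<noteq> x'" by simp
  define \<delta> where "\<delta> = \<gamma>'((Suc (Suc (Suc t))) := x')"
  have R: "Rc (Suc (Suc (Suc (Suc t)))) L \<gamma>' \<delta>" unfolding \<delta>_def by (rule rc_upd[OF g'(2) wN xw h1 h2])
  have C: "Col (Suc (Suc (Suc (Suc t)))) L \<delta>" unfolding \<delta>_def by (rule col_upd[OF g'(2) wN xw h1 h2])
  have g1m: "\<gamma>1 (Suc t) \<in> L (Suc t)" using g1(2) unfolding Col_iff by simp
  have "free (Suc (Suc (Suc (Suc t)))) L \<delta> (Suc (Suc t))"
  proof (rule freeI[where s=x])
    show "x \<in> L (Suc (Suc t))" using x(1) Lwu by auto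
    show "x \<noteq> \<delta> (Suc (Suc t))" using g'(5) unfolding \<delta>_def by auto
    show "\<delta> ((Suc (Suc t)) - 1) \<noteq> x" using g'(4) g1m x(4) unfolding \<delta>_def by auto
    show "\<delta> (Suc (Suc (Suc t))) \<noteq> x" using x(3) unfolding \<delta>_def by auto
  qed
  then have "G (Suc (Suc (Suc t))) L x' \<delta>" unfolding G_def using C by (auto simp: \<delta>_def)
  moreover have "Rc (Suc (Suc (Suc (Suc t)))) L \<gamma> \<delta>" using g1(1) g'(1) R rc_trans by blast
  ultimately show ?thesis by blast
qed


lemma card2_all: "\<forall>v<(Suc (Suc (Suc (Suc t)))). card (L v) \<ge> 2"
proof (intro allI impI)
  fix v assume v: "v < (Suc (Suc (Suc (Suc t))))"
  have "dg (Suc (Suc (Suc (Suc t)))) v \<ge> 1" unfolding dg_def by simp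
  then show "card (L v) \<ge> 2" using Ldeg v by fastforce
qed

lemma link_exist:
  assumes pq: "L (Suc (Suc (Suc t))) = {p, q}" "p \<noteq> q" "p \<in> L (Suc t)" "q \<in> L (Suc t)"
  shows "\<exists>\<theta> \<theta>'. G (Suc (Suc (Suc t))) L p \<theta> \<and> G (Suc (Suc (Suc t))) L q \<theta>' \<and> Rc (Suc (Suc (Suc (Suc t)))) L \<theta> \<theta>'"
proof -
  have fpq: "finite {p, q}" by simp
  have "card {p, q} < card (L (Suc (Suc t)))" using card_u pq(2) by simp
  then obtain r where r: "r \<in> L (Suc (Suc t))" "r \<notin> {p, q}" using pick[OF fpq] by blast
  have pu: "p \<in> L (Suc (Suc t))" and qu: "q \<in> L (Suc (Suc t))" using pq(1) Lwu by auto
  have pw: "p \<in> L (Suc (Suc (Suc t)))" and qw: "q \<in> L (Suc (Suc (Suc t)))" using pq(1) by auto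
  have wN: "(Suc (Suc (Suc t))) < (Suc (Suc (Suc (Suc t))))" by simp
  show ?thesis
  proof (cases "\<exists>x\<in>L (Suc t). x \<notin> {p, q, r}")
    case True
    then obtain x where x: "x \<in> L (Suc t)" "x \<notin> {p, q, r}" by blast
    define \<theta>0 where "\<theta>0 = (\<lambda>i. if i = (Suc (Suc (Suc t))) then p else if i = (Suc (Suc t)) then r else x)"
    have vs: "\<And>v. (Suc t) \<le> v \<Longrightarrow> v < (Suc (Suc (Suc (Suc t)))) \<Longrightarrow> v = (Suc t) \<or> v = (Suc (Suc t)) \<or> v = (Suc (Suc (Suc t)))" by arith
    have e1: "\<forall>v. (Suc t) \<le> v \<longrightarrow> v < (Suc (Suc (Suc (Suc t)))) \<longrightarrow> \<theta>0 v \<in> L v"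
    proof (intro allI impI)
      fix v assume "(Suc t) \<le> v" "v < (Suc (Suc (Suc (Suc t))))"
      then consider "v = (Suc t)" | "v = (Suc (Suc t))" | "v = (Suc (Suc (Suc t)))" using vs by blast
      then show "\<theta>0 v \<in> L v" unfolding \<theta>0_def by cases (use x r pw in auto)
    qed
    have e2: "\<forall>i. (Suc t) \<le> i \<longrightarrow> Suc i < (Suc (Suc (Suc (Suc t)))) \<longrightarrow> \<theta>0 i \<noteq> \<theta>0 (Suc i)"
    proof (intro allI impI)
      fix i assume "(Suc t) \<le> i" "Suc i < (Suc (Suc (Suc (Suc t))))"
      then consider "i = (Suc t)" | "i = (Suc (Suc t))" using vs by fastforce
      then show "\<theta>0 i \<noteq> \<theta>0 (Suc i)" unfolding \<theta>0_def by cases (use x r in auto)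
    qed
    have e0: "\<forall>v<(Suc t). card (L v) \<ge> 2" using card2_all by simp
    obtain \<theta> where th: "Col (Suc (Suc (Suc (Suc t)))) L \<theta>" "\<forall>v. (Suc t) \<le> v \<longrightarrow> \<theta> v = \<theta>0 v"
      using extend[of "(Suc t)" "(Suc (Suc (Suc (Suc t))))" L \<theta>0] e0 e1 e2 by auto
    have tw: "\<theta> (Suc (Suc (Suc t))) = p" and tu: "\<theta> (Suc (Suc t)) = r" and tm: "\<theta> (Suc t) = x"
      using th(2) x r unfolding \<theta>0_def by auto
    have "free (Suc (Suc (Suc (Suc t)))) L \<theta> (Suc (Suc t))"
      by (rule freeI[where s=q]) (use qu r x tw tu tm pq(2) in auto)
    then have G1: "G (Suc (Suc (Suc t))) L p \<theta>" by (rule G_intro[OF th(1) tw, rotated]) simp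
    have h1: "0 < (Suc (Suc (Suc t))) \<longrightarrow> \<theta> ((Suc (Suc (Suc t))) - 1) \<noteq> q" using tu r by auto
    have h2: "Suc (Suc (Suc (Suc t))) < (Suc (Suc (Suc (Suc t)))) \<longrightarrow> \<theta> (Suc (Suc (Suc (Suc t)))) \<noteq> q" by simp
    have R: "Rc (Suc (Suc (Suc (Suc t)))) L \<theta> (\<theta>((Suc (Suc (Suc t))) := q))" by (rule rc_upd[OF th(1) wN qw h1 h2])
    have C: "Col (Suc (Suc (Suc (Suc t)))) L (\<theta>((Suc (Suc (Suc t))) := q))" by (rule col_upd[OF th(1) wN qw h1 h2])
    have "free (Suc (Suc (Suc (Suc t)))) L (\<theta>((Suc (Suc (Suc t))) := q)) (Suc (Suc t))"
      by (rule freeI[where s=p]) (use pu r x tw tu tm pq(2) in auto)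
    then have G2: "G (Suc (Suc (Suc t))) L q (\<theta>((Suc (Suc (Suc t))) := q))" by (rule G_intro[OF C, rotated 2]) simp_all
    show ?thesis using G1 G2 R by blast
  next
    case False
    then have Lm: "L (Suc t) \<subseteq> {p, q, r}" by blast
    show ?thesis
    proof (cases "\<exists>y\<in>L t. y \<notin> {p, q}")
      case True
      then obtain y where y: "y \<in> L t" "y \<notin> {p, q}" by blast
      define \<theta>0 where "\<theta>0 = (\<lambda>i. if i = (Suc (Suc (Suc t))) then p else if i = (Suc (Suc t)) then r else if i = (Suc t) then q else y)"
      have vs: "\<And>v. t \<le> v \<Longrightarrow> v < (Suc (Suc (Suc (Suc t)))) \<Longrightarrow> v = t \<or> v = (Suc t) \<or> v = (Suc (Suc t)) \<or> v = (Suc (Suc (Suc t)))" by arith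
      have e1: "\<forall>v. t \<le> v \<longrightarrow> v < (Suc (Suc (Suc (Suc t)))) \<longrightarrow> \<theta>0 v \<in> L v"
      proof (intro allI impI)
        fix v assume "t \<le> v" "v < (Suc (Suc (Suc (Suc t))))"
        then consider "v = t" | "v = (Suc t)" | "v = (Suc (Suc t))" | "v = (Suc (Suc (Suc t)))" using vs by blast
        then show "\<theta>0 v \<in> L v" unfolding \<theta>0_def by cases (use y r pw pq in auto)
      qed
      have e2: "\<forall>i. t \<le> i \<longrightarrow> Suc i < (Suc (Suc (Suc (Suc t)))) \<longrightarrow> \<theta>0 i \<noteq> \<theta>0 (Suc i)"
      proof (intro allI impI)
        fix i assume "t \<le> i" "Suc i < (Suc (Suc (Suc (Suc t))))"
        then consider "i = t" | "i = (Suc t)" | "i = (Suc (Suc t))" using vs by fastforce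
        then show "\<theta>0 i \<noteq> \<theta>0 (Suc i)" unfolding \<theta>0_def by cases (use y r in auto)
      qed
      have e0: "\<forall>v<t. card (L v) \<ge> 2" using card2_all by simp
      obtain \<theta> where th: "Col (Suc (Suc (Suc (Suc t)))) L \<theta>" "\<forall>v. t \<le> v \<longrightarrow> \<theta> v = \<theta>0 v"
        using extend[of t "(Suc (Suc (Suc (Suc t))))" L \<theta>0] e0 e1 e2 by auto
      have tw: "\<theta> (Suc (Suc (Suc t))) = p" and tu: "\<theta> (Suc (Suc t)) = r" and tm: "\<theta> (Suc t) = q" and tt: "\<theta> t = y"
        using th(2) y r unfolding \<theta>0_def by auto
      have "free (Suc (Suc (Suc (Suc t)))) L \<theta> (Suc t)"
        by (rule freeI[where s=p]) (use pq y r tw tu tm tt in auto)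
      then have G1: "G (Suc (Suc (Suc t))) L p \<theta>" by (rule G_intro[OF th(1) tw, rotated]) simp
      have h1: "0 < (Suc (Suc (Suc t))) \<longrightarrow> \<theta> ((Suc (Suc (Suc t))) - 1) \<noteq> q" using tu r by auto
      have h2: "Suc (Suc (Suc (Suc t))) < (Suc (Suc (Suc (Suc t)))) \<longrightarrow> \<theta> (Suc (Suc (Suc (Suc t)))) \<noteq> q" by simp
      have R: "Rc (Suc (Suc (Suc (Suc t)))) L \<theta> (\<theta>((Suc (Suc (Suc t))) := q))" by (rule rc_upd[OF th(1) wN qw h1 h2])
      have C: "Col (Suc (Suc (Suc (Suc t)))) L (\<theta>((Suc (Suc (Suc t))) := q))" by (rule col_upd[OF th(1) wN qw h1 h2])
      have "free (Suc (Suc (Suc (Suc t)))) L (\<theta>((Suc (Suc (Suc t))) := q)) (Suc t)"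
        by (rule freeI[where s=p]) (use pq y r tw tu tm tt in auto)
      then have G2: "G (Suc (Suc (Suc t))) L q (\<theta>((Suc (Suc (Suc t))) := q))" by (rule G_intro[OF C, rotated 2]) simp_all
      show ?thesis using G1 G2 R by blast
    next
      case False
      then have Lt: "L t \<subseteq> {p, q}" by blast
      have t0: "t = 0"
      proof (rule ccontr)
        assume "t \<noteq> 0"
        then have "dg (Suc (Suc (Suc (Suc t)))) t = 2" unfolding dg_def by simp
        moreover have "card (L t) \<ge> dg (Suc (Suc (Suc (Suc t)))) t + 1" using Ldeg by simp
        ultimately have "card (L t) \<ge> 3" by simp
        moreover have "card (L t) \<le> card {p, q}" using card_mono[OF fpq Lt] .
        moreover have "card {p, q} \<le> 2" by (simp add: card_insert_if)
        ultimately show False by linarith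
      qed
      have fu: "finite (L (Suc (Suc t)))" using fin by simp
      have sub: "{p, q, r} \<subseteq> L (Suc (Suc t))" using pu qu r by auto
      have "card {p, q, r} = 3" using pq(2) r(2) by (auto simp: card_insert_if)
      then have Lu: "L (Suc (Suc t)) = {p, q, r}" using card_subset_eq[OF fu sub] card_u by simp
      have "\<forall>v<(Suc (Suc (Suc (Suc t)))). L v \<subseteq> {p, q, r}"
      proof (intro allI impI)
        fix v assume "v < (Suc (Suc (Suc (Suc t))))"
        then consider "v = t" | "v = (Suc t)" | "v = (Suc (Suc t))" | "v = (Suc (Suc (Suc t)))" using t0 by fastforce
        then show "L v \<subseteq> {p, q, r}" by cases (use Lt Lm Lu pq(1) in auto)
      qed
      then have "(\<Union>v<(Suc (Suc (Suc (Suc t)))). L v) \<subseteq> {p, q, r}" by blast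
      then have "card (\<Union>v<(Suc (Suc (Suc (Suc t)))). L v) \<le> card {p, q, r}" by (rule card_mono[rotated]) simp
      moreover have "card {p, q, r} \<le> 3" by (simp add: card_insert_if)
      ultimately show ?thesis using U4 by linarith
    qed
  qed
qed


lemma fin_red: "finite (\<Union>v<(Suc (Suc (Suc t))). Lr L (Suc (Suc t)) x v)"
proof -
  have "\<forall>v\<in>{..<(Suc (Suc (Suc t)))}. finite (Lr L (Suc (Suc t)) x v)" using fin by simp
  then show ?thesis by (intro finite_UN_I) auto
qed

lemma union_in:
  assumes "x \<in> L (Suc t)"
  shows "card (\<Union>v<(Suc (Suc (Suc t))). Lr L (Suc (Suc t)) x v) \<ge> 4"
proof -
  have "(\<Union>v<(Suc (Suc (Suc (Suc t)))). L v) \<subseteq> (\<Union>v<(Suc (Suc (Suc t))). Lr L (Suc (Suc t)) x v)"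
  proof
    fix y assume "y \<in> (\<Union>v<(Suc (Suc (Suc (Suc t)))). L v)"
    then obtain v where v: "v < (Suc (Suc (Suc (Suc t))))" "y \<in> L v" by blast
    show "y \<in> (\<Union>v<(Suc (Suc (Suc t))). Lr L (Suc (Suc t)) x v)"
    proof (cases "v < (Suc (Suc t))")
      case True
      then have "y \<in> Lr L (Suc (Suc t)) x v" using v by simp
      then show ?thesis using True by (intro UN_I[of v]) auto
    next
      case False
      then have "v = (Suc (Suc t)) \<or> v = (Suc (Suc (Suc t)))" using v(1) by arith
      then have yu: "y \<in> L (Suc (Suc t))" using v(2) Lwu by auto
      show ?thesis
      proof (cases "y = x")
        case True
        then have "y \<in> Lr L (Suc (Suc t)) x (Suc t)" using assms by simp
        then show ?thesis by (intro UN_I[of "(Suc t)"]) auto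
      next
        case False
        then have "y \<in> Lr L (Suc (Suc t)) x (Suc (Suc t))" using yu by simp
        then show ?thesis by (intro UN_I[of "(Suc (Suc t))"]) auto
      qed
    qed
  qed
  then have "card (\<Union>v<(Suc (Suc (Suc (Suc t)))). L v) \<le> card (\<Union>v<(Suc (Suc (Suc t))). Lr L (Suc (Suc t)) x v)" by (rule card_mono[OF fin_red])
  then show ?thesis using U4 by linarith
qed

lemma union_out:
  assumes "x' \<in> L (Suc (Suc (Suc t)))" "x' \<noteq> x" "x' \<notin> L (Suc t)"
  shows "card (\<Union>v<(Suc (Suc (Suc t))). Lr L (Suc (Suc t)) x v) \<ge> 4"
proof -
  have "insert x' (L (Suc t)) \<subseteq> (\<Union>v<(Suc (Suc (Suc t))). Lr L (Suc (Suc t)) x v)"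
  proof
    fix y assume "y \<in> insert x' (L (Suc t))"
    then consider "y = x'" | "y \<in> L (Suc t)" by blast
    then show "y \<in> (\<Union>v<(Suc (Suc (Suc t))). Lr L (Suc (Suc t)) x v)"
    proof cases
      case 1
      then have "y \<in> Lr L (Suc (Suc t)) x (Suc (Suc t))" using assms Lwu by auto
      then show ?thesis by (intro UN_I[of "(Suc (Suc t))"]) auto
    next
      case 2
      then have "y \<in> Lr L (Suc (Suc t)) x (Suc t)" by simp
      then show ?thesis by (intro UN_I[of "(Suc t)"]) auto
    qed
  qed
  then have "card (insert x' (L (Suc t))) \<le> card (\<Union>v<(Suc (Suc (Suc t))). Lr L (Suc (Suc t)) x v)" by (rule card_mono[OF fin_red])
  moreover have "card (insert x' (L (Suc t))) = 4" using card_m assms(3) fin[of "(Suc t)"] by simp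
  ultimately show ?thesis by linarith
qed


lemma claim1:
  assumes IH: "\<And>(L'::nat \<Rightarrow> 'c set) \<alpha> \<beta>. \<forall>v<(Suc (Suc (Suc t))). card (L' v) \<ge> dg (Suc (Suc (Suc t))) v + 1 \<Longrightarrow> card (\<Union>v<(Suc (Suc (Suc t))). L' v) \<ge> 4
      \<Longrightarrow> Col (Suc (Suc (Suc t))) L' \<alpha> \<Longrightarrow> Col (Suc (Suc (Suc t))) L' \<beta> \<Longrightarrow> (\<exists>v<(Suc (Suc (Suc t))). free (Suc (Suc (Suc t))) L' \<alpha> v) \<Longrightarrow> (\<exists>v<(Suc (Suc (Suc t))). free (Suc (Suc (Suc t))) L' \<beta> v)
      \<Longrightarrow> Rc (Suc (Suc (Suc t))) L' \<alpha> \<beta>"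
    and c: "c \<in> L (Suc (Suc (Suc t)))" and U: "card (\<Union>v<(Suc (Suc (Suc t))). Lr L (Suc (Suc t)) c v) \<ge> 4"
    and g1: "G (Suc (Suc (Suc t))) L c \<gamma>" and g2: "G (Suc (Suc (Suc t))) L c \<delta>"
  shows "Rc (Suc (Suc (Suc (Suc t)))) L \<gamma> \<delta>"
proof -
  have cg: "Col (Suc (Suc (Suc (Suc t)))) L \<gamma>" and gw: "\<gamma> (Suc (Suc (Suc t))) = c" using g1 unfolding G_def by auto
  have cd: "Col (Suc (Suc (Suc (Suc t)))) L \<delta>" and dw: "\<delta> (Suc (Suc (Suc t))) = c" using g2 unfolding G_def by auto
  obtain v1 where v1: "v1 < (Suc (Suc (Suc t)))" "free (Suc (Suc (Suc (Suc t)))) L \<gamma> v1" using g1 unfolding G_def by auto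
  obtain v2 where v2: "v2 < (Suc (Suc (Suc t)))" "free (Suc (Suc (Suc (Suc t)))) L \<delta> v2" using g2 unfolding G_def by auto
  have f1: "free (Suc (Suc (Suc t))) (Lr L (Suc (Suc t)) c) \<gamma> v1" by (rule restrict_free[OF v1(2) _ gw]) (use v1(1) in simp)
  have f2: "free (Suc (Suc (Suc t))) (Lr L (Suc (Suc t)) c) \<delta> v2" by (rule restrict_free[OF v2(2) _ dw]) (use v2(1) in simp)
  have "Rc (Suc (Suc (Suc t))) (Lr L (Suc (Suc t)) c) \<gamma> \<delta>"
  proof (rule IH)
    show "\<forall>v<(Suc (Suc (Suc t))). card (Lr L (Suc (Suc t)) c v) \<ge> dg (Suc (Suc (Suc t))) v + 1" using reduce_ok[OF Ldeg, of c] .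
    show "card (\<Union>v<(Suc (Suc (Suc t))). Lr L (Suc (Suc t)) c v) \<ge> 4" by (rule U)
    show "Col (Suc (Suc (Suc t))) (Lr L (Suc (Suc t)) c) \<gamma>" by (rule restrict_col[OF cg gw])
    show "Col (Suc (Suc (Suc t))) (Lr L (Suc (Suc t)) c) \<delta>" by (rule restrict_col[OF cd dw])
    show "\<exists>v<(Suc (Suc (Suc t))). free (Suc (Suc (Suc t))) (Lr L (Suc (Suc t)) c) \<gamma> v" using f1 v1(1) by blast
    show "\<exists>v<(Suc (Suc (Suc t))). free (Suc (Suc (Suc t))) (Lr L (Suc (Suc t)) c) \<delta> v" using f2 v2(1) by blast
  qed
  then show ?thesis by (rule lift_rc'[of "(Suc (Suc t))" L c \<gamma> \<delta>, OF _ c gw dw])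
qed

lemma reach:
  assumes pq: "L (Suc (Suc (Suc t))) = {p, q}" "p \<noteq> q" "q \<notin> L (Suc t)"
    and ca: "Col (Suc (Suc (Suc (Suc t)))) L \<alpha>" and uf: "\<exists>v<(Suc (Suc (Suc (Suc t)))). free (Suc (Suc (Suc (Suc t)))) L \<alpha> v"
  shows "\<exists>\<gamma>. G (Suc (Suc (Suc t))) L p \<gamma> \<and> Rc (Suc (Suc (Suc (Suc t)))) L \<alpha> \<gamma>"
proof -
  obtain c \<gamma> where c: "c \<in> L (Suc (Suc (Suc t)))" "G (Suc (Suc (Suc t))) L c \<gamma>" "Rc (Suc (Suc (Suc (Suc t)))) L \<alpha> \<gamma>" using claim2[OF ca uf] by blast
  show ?thesis
  proof (cases "c = p")
    case True
    then show ?thesis using c by blast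
  next
    case False
    then have cq: "c = q" using c(1) pq(1) by blast
    obtain \<delta> where d: "G (Suc (Suc (Suc t))) L p \<delta>" "Rc (Suc (Suc (Suc (Suc t)))) L \<gamma> \<delta>"
      using link_direct[of q p \<gamma>] pq c(2) cq by auto
    then show ?thesis using c(3) rc_trans by blast
  qed
qed

lemma main_one:
  assumes IH: "\<And>(L'::nat \<Rightarrow> 'c set) \<alpha> \<beta>. \<forall>v<(Suc (Suc (Suc t))). card (L' v) \<ge> dg (Suc (Suc (Suc t))) v + 1 \<Longrightarrow> card (\<Union>v<(Suc (Suc (Suc t))). L' v) \<ge> 4
      \<Longrightarrow> Col (Suc (Suc (Suc t))) L' \<alpha> \<Longrightarrow> Col (Suc (Suc (Suc t))) L' \<beta> \<Longrightarrow> (\<exists>v<(Suc (Suc (Suc t))). free (Suc (Suc (Suc t))) L' \<alpha> v) \<Longrightarrow> (\<exists>v<(Suc (Suc (Suc t))). free (Suc (Suc (Suc t))) L' \<beta> v)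
      \<Longrightarrow> Rc (Suc (Suc (Suc t))) L' \<alpha> \<beta>"
    and pq: "L (Suc (Suc (Suc t))) = {p, q}" "p \<noteq> q" "q \<notin> L (Suc t)"
    and ca: "Col (Suc (Suc (Suc (Suc t)))) L \<alpha>" and uf: "\<exists>v<(Suc (Suc (Suc (Suc t)))). free (Suc (Suc (Suc (Suc t)))) L \<alpha> v"
    and cb: "Col (Suc (Suc (Suc (Suc t)))) L \<beta>" and ufb: "\<exists>v<(Suc (Suc (Suc (Suc t)))). free (Suc (Suc (Suc (Suc t)))) L \<beta> v"
  shows "Rc (Suc (Suc (Suc (Suc t)))) L \<alpha> \<beta>"
proof -
  have pw: "p \<in> L (Suc (Suc (Suc t)))" and qw: "q \<in> L (Suc (Suc (Suc t)))" using pq(1) by auto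
  have U: "card (\<Union>v<(Suc (Suc (Suc t))). Lr L (Suc (Suc t)) p v) \<ge> 4"
  proof (cases "p \<in> L (Suc t)")
    case True then show ?thesis by (rule union_in)
  next
    case False then show ?thesis using union_out[OF qw _ pq(3), of p] pq(2) by auto
  qed
  obtain \<gamma>1 where g1: "G (Suc (Suc (Suc t))) L p \<gamma>1" "Rc (Suc (Suc (Suc (Suc t)))) L \<alpha> \<gamma>1" using reach[OF pq ca uf] by blast
  obtain \<gamma>2 where g2: "G (Suc (Suc (Suc t))) L p \<gamma>2" "Rc (Suc (Suc (Suc (Suc t)))) L \<beta> \<gamma>2" using reach[OF pq cb ufb] by blast
  have "Rc (Suc (Suc (Suc (Suc t)))) L \<gamma>1 \<gamma>2" by (rule claim1[OF IH pw U g1(1) g2(1)])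
  then show ?thesis using g1(2) g2(2) rc_trans rc_sym by metis
qed

lemma main_both:
  assumes IH: "\<And>(L'::nat \<Rightarrow> 'c set) \<alpha> \<beta>. \<forall>v<(Suc (Suc (Suc t))). card (L' v) \<ge> dg (Suc (Suc (Suc t))) v + 1 \<Longrightarrow> card (\<Union>v<(Suc (Suc (Suc t))). L' v) \<ge> 4
      \<Longrightarrow> Col (Suc (Suc (Suc t))) L' \<alpha> \<Longrightarrow> Col (Suc (Suc (Suc t))) L' \<beta> \<Longrightarrow> (\<exists>v<(Suc (Suc (Suc t))). free (Suc (Suc (Suc t))) L' \<alpha> v) \<Longrightarrow> (\<exists>v<(Suc (Suc (Suc t))). free (Suc (Suc (Suc t))) L' \<beta> v)
      \<Longrightarrow> Rc (Suc (Suc (Suc t))) L' \<alpha> \<beta>"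
    and pq: "L (Suc (Suc (Suc t))) = {p, q}" "p \<noteq> q" "p \<in> L (Suc t)" "q \<in> L (Suc t)"
    and ca: "Col (Suc (Suc (Suc (Suc t)))) L \<alpha>" and uf: "\<exists>v<(Suc (Suc (Suc (Suc t)))). free (Suc (Suc (Suc (Suc t)))) L \<alpha> v"
    and cb: "Col (Suc (Suc (Suc (Suc t)))) L \<beta>" and ufb: "\<exists>v<(Suc (Suc (Suc (Suc t)))). free (Suc (Suc (Suc (Suc t)))) L \<beta> v"
  shows "Rc (Suc (Suc (Suc (Suc t)))) L \<alpha> \<beta>"
proof -
  have pw: "p \<in> L (Suc (Suc (Suc t)))" and qw: "q \<in> L (Suc (Suc (Suc t)))" using pq(1) by auto
  have Up: "card (\<Union>v<(Suc (Suc (Suc t))). Lr L (Suc (Suc t)) p v) \<ge> 4" by (rule union_in[OF pq(3)])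
  have Uq: "card (\<Union>v<(Suc (Suc (Suc t))). Lr L (Suc (Suc t)) q v) \<ge> 4" by (rule union_in[OF pq(4)])
  have Cp: "\<And>\<gamma> \<delta>. G (Suc (Suc (Suc t))) L p \<gamma> \<Longrightarrow> G (Suc (Suc (Suc t))) L p \<delta> \<Longrightarrow> Rc (Suc (Suc (Suc (Suc t)))) L \<gamma> \<delta>" by (rule claim1[OF IH pw Up])
  have Cq: "\<And>\<gamma> \<delta>. G (Suc (Suc (Suc t))) L q \<gamma> \<Longrightarrow> G (Suc (Suc (Suc t))) L q \<delta> \<Longrightarrow> Rc (Suc (Suc (Suc (Suc t)))) L \<gamma> \<delta>" by (rule claim1[OF IH qw Uq])
  obtain \<theta> \<theta>' where th: "G (Suc (Suc (Suc t))) L p \<theta>" "G (Suc (Suc (Suc t))) L q \<theta>'" "Rc (Suc (Suc (Suc (Suc t)))) L \<theta> \<theta>'" using link_exist[OF pq] by blast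
  have toP: "\<And>c \<gamma>. c \<in> L (Suc (Suc (Suc t))) \<Longrightarrow> G (Suc (Suc (Suc t))) L c \<gamma> \<Longrightarrow> Rc (Suc (Suc (Suc (Suc t)))) L \<gamma> \<theta>"
  proof -
    fix c \<gamma> assume c: "c \<in> L (Suc (Suc (Suc t)))" "G (Suc (Suc (Suc t))) L c \<gamma>"
    then consider "c = p" | "c = q" using pq(1) by blast
    then show "Rc (Suc (Suc (Suc (Suc t)))) L \<gamma> \<theta>"
    proof cases
      case 1 then show ?thesis using Cp c(2) th(1) by blast
    next
      case 2
      then have "Rc (Suc (Suc (Suc (Suc t)))) L \<gamma> \<theta>'" using Cq c(2) th(2) by blast
      then show ?thesis using th(3) rc_trans rc_sym by metis
    qed
  qed
  obtain c1 \<gamma>1 where g1: "c1 \<in> L (Suc (Suc (Suc t)))" "G (Suc (Suc (Suc t))) L c1 \<gamma>1" "Rc (Suc (Suc (Suc (Suc t)))) L \<alpha> \<gamma>1" using claim2[OF ca uf] by blast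
  obtain c2 \<gamma>2 where g2: "c2 \<in> L (Suc (Suc (Suc t)))" "G (Suc (Suc (Suc t))) L c2 \<gamma>2" "Rc (Suc (Suc (Suc (Suc t)))) L \<beta> \<gamma>2" using claim2[OF cb ufb] by blast
  have "Rc (Suc (Suc (Suc (Suc t)))) L \<gamma>1 \<theta>" by (rule toP[OF g1(1,2)])
  moreover have "Rc (Suc (Suc (Suc (Suc t)))) L \<gamma>2 \<theta>" by (rule toP[OF g2(1,2)])
  ultimately show ?thesis using g1(3) g2(3) rc_trans rc_sym by metis
qed


lemma main_c:
  assumes IH: "\<And>(L'::nat \<Rightarrow> 'c set) \<alpha> \<beta>. \<forall>v<(Suc (Suc (Suc t))). card (L' v) \<ge> dg (Suc (Suc (Suc t))) v + 1 \<Longrightarrow> card (\<Union>v<(Suc (Suc (Suc t))). L' v) \<ge> 4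
      \<Longrightarrow> Col (Suc (Suc (Suc t))) L' \<alpha> \<Longrightarrow> Col (Suc (Suc (Suc t))) L' \<beta> \<Longrightarrow> (\<exists>v<(Suc (Suc (Suc t))). free (Suc (Suc (Suc t))) L' \<alpha> v) \<Longrightarrow> (\<exists>v<(Suc (Suc (Suc t))). free (Suc (Suc (Suc t))) L' \<beta> v)
      \<Longrightarrow> Rc (Suc (Suc (Suc t))) L' \<alpha> \<beta>"
    and ca: "Col (Suc (Suc (Suc (Suc t)))) L \<alpha>" and uf: "\<exists>v<(Suc (Suc (Suc (Suc t)))). free (Suc (Suc (Suc (Suc t)))) L \<alpha> v"
    and cb: "Col (Suc (Suc (Suc (Suc t)))) L \<beta>" and ufb: "\<exists>v<(Suc (Suc (Suc (Suc t)))). free (Suc (Suc (Suc (Suc t)))) L \<beta> v"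
  shows "Rc (Suc (Suc (Suc (Suc t)))) L \<alpha> \<beta>"
proof -
  obtain p q where pq: "L (Suc (Suc (Suc t))) = {p, q}" "p \<noteq> q" using card_w by (meson card_2_iff)
  show ?thesis
  proof (cases "q \<in> L (Suc t)")
    case False
    show ?thesis by (rule main_one[OF IH pq False ca uf cb ufb])
  next
    case qm: True
    show ?thesis
    proof (cases "p \<in> L (Suc t)")
      case False
      have pq': "L (Suc (Suc (Suc t))) = {q, p}" "q \<noteq> p" using pq by auto
      show ?thesis by (rule main_one[OF IH pq' False ca uf cb ufb])
    next
      case True
      show ?thesis by (rule main_both[OF IH pq True qm ca uf cb ufb])
    qed
  qed
qed

end



lemma mainT:
  fixes L :: "nat \<Rightarrow> 'c set"
  shows "3 \<le> n \<Longrightarrow> \<forall>v<n. card (L v) \<ge> dg n v + 1 \<Longrightarrow> card (\<Union>v<n. L v) \<ge> 4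
    \<Longrightarrow> Col n L \<alpha> \<Longrightarrow> Col n L \<beta> \<Longrightarrow> (\<exists>v<n. free n L \<alpha> v) \<Longrightarrow> (\<exists>v<n. free n L \<beta> v)
    \<Longrightarrow> Rc n L \<alpha> \<beta>"
proof (induction n arbitrary: L \<alpha> \<beta> rule: less_induct)
  case (less n)
  obtain k where n: "n = Suc (Suc k)" "1 \<le> k" using less.prems(1)
    by (metis Suc_le_D Suc_le_mono numeral_3_eq_3 One_nat_def)
  have Ldeg: "\<forall>v<Suc (Suc k). card (L v) \<ge> dg (Suc (Suc k)) v + 1" using less.prems(2) n by simp
  have ca: "Col (Suc (Suc k)) L \<alpha>" and cb: "Col (Suc (Suc k)) L \<beta>" using less.prems(4,5) n by simp_all
  show ?case
  proof (cases "\<exists>r<n. card (L r) \<ge> dg n r + 2")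
    case True
    then obtain r where "r < n" "card (L r) \<ge> dg n r + 2" by blast
    then show ?thesis using FC1[OF less.prems(2) _ _ less.prems(4) less.prems(5)] by blast
  next
    case nr: False
    show ?thesis
    proof (cases "\<exists>p\<in>L (Suc k). p \<notin> L k")
      case True
      then obtain p where "p \<in> L (Suc k)" "p \<notin> L k" by blast
      then show ?thesis using FC2[OF Ldeg _ _ ca cb] n by blast
    next
      case nw: False
      show ?thesis
      proof (cases "\<exists>p\<in>L 0. p \<notin> L 1")
        case True
        then obtain p where "p \<in> L 0" "p \<notin> L 1" by blast
        then show ?thesis using FC2_left[OF Ldeg _ _ ca cb] n by blast
      next
        case n0: False
        have tight: "\<forall>v<n. card (L v) \<le> dg n v + 1" using nr by fastforce
        have Lwu: "L (Suc k) \<subseteq> L k" using nw by blast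
        have L01: "L 0 \<subseteq> L 1" using n0 by blast
        show ?thesis
        proof (cases "k = 1")
          case True
          have n3: "n = 3" using n True by simp
          have "(\<Union>v<n. L v) \<subseteq> L 1"
          proof
            fix y assume "y \<in> (\<Union>v<n. L v)"
            then obtain v where v0: "v < n" "y \<in> L v" by blast
            then have v: "v < 3" "y \<in> L v" using n3 by simp_all
            then consider "v = 0" | "v = Suc 0" | "v = Suc (Suc 0)" by arith
            then show "y \<in> L 1" by cases (use v L01 Lwu True in auto)
          qed
          moreover have d1: "dg n 1 = 2" using n3 by (simp add: dg_def)
          moreover have "card (L 1) \<le> dg n 1 + 1" using tight n3 by simp
          moreover have "card (L 1) \<ge> dg n 1 + 1" using less.prems(2) n3 by simp
          moreover have "finite (L 1)" using calculation by (intro fin_of_card) simp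
          ultimately have "card (\<Union>v<n. L v) \<le> 3" using card_mono[of "L 1" "\<Union>v<n. L v"] by simp
          then show ?thesis using less.prems(3) by simp
        next
          case False
          have "k = Suc (Suc (k - 2))" using n(2) False by arith
          then obtain t where t: "k = Suc (Suc t)" by blast
          have nN: "n = Suc (Suc (Suc (Suc t)))" using n t by simp
          have IH: "\<And>(L'::nat \<Rightarrow> 'c set) \<alpha> \<beta>. \<forall>v<Suc (Suc (Suc t)). card (L' v) \<ge> dg (Suc (Suc (Suc t))) v + 1
            \<Longrightarrow> card (\<Union>v<Suc (Suc (Suc t)). L' v) \<ge> 4
            \<Longrightarrow> Col (Suc (Suc (Suc t))) L' \<alpha> \<Longrightarrow> Col (Suc (Suc (Suc t))) L' \<beta>
            \<Longrightarrow> (\<exists>v<Suc (Suc (Suc t)). free (Suc (Suc (Suc t))) L' \<alpha> v)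
            \<Longrightarrow> (\<exists>v<Suc (Suc (Suc t)). free (Suc (Suc (Suc t))) L' \<beta> v)
            \<Longrightarrow> Rc (Suc (Suc (Suc t))) L' \<alpha> \<beta>"
            by (rule less.IH) (use nN in simp_all)
          note P = less.prems[unfolded nN]
          have T: "\<forall>v<Suc (Suc (Suc (Suc t))). card (L v) \<le> dg (Suc (Suc (Suc (Suc t)))) v + 1" using tight nN by simp
          have W: "L (Suc (Suc (Suc t))) \<subseteq> L (Suc (Suc t))" using Lwu t by simp
          show ?thesis unfolding nN by (rule main_c[OF P(2) T W P(3) IH P(4) P(6) P(5) P(7)])
        qed
      qed
    qed
  qed
qed

theorem mainTheorem13:
  fixes n :: nat and L :: "nat \<Rightarrow> 'c set" and \<alpha> \<beta> :: "nat \<Rightarrow> 'c"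
  assumes "n \<ge> 3"
    and "\<forall>v \<in> path_verts n. card (L v) \<ge> degree (path_verts n) (path_adj n) v + 1"
    and "L_colouring (path_verts n) (path_adj n) L \<alpha>"
    and "L_colouring (path_verts n) (path_adj n) L \<beta>"
    and "unfrozen (path_verts n) (path_adj n) L \<alpha>"
    and "unfrozen (path_verts n) (path_adj n) L \<beta>"
    and "card (\<Union>v \<in> path_verts n. L v) \<ge> 4"
  shows "reconf (path_verts n) (path_adj n) L \<alpha> \<beta>"
proof -
  have pv: "path_verts n = {..<n}" unfolding path_verts_def by auto
  have d: "\<forall>v<n. card (L v) \<ge> dg n v + 1"
  proof (intro allI impI)
    fix v assume v: "v < n"
    then have "v \<in> path_verts n" by (simp add: path_verts_def)
    then show "card (L v) \<ge> dg n v + 1" using assms(2) degree_eq[OF v] by auto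
  qed
  have u: "card (\<Union>v<n. L v) \<ge> 4" using assms(7) unfolding pv .
  have uf: "\<exists>v<n. free n L \<gamma> v" if h: "unfrozen (path_verts n) (path_adj n) L \<gamma>" for \<gamma>
  proof -
    obtain v where v: "v \<in> path_verts n" "\<not> frozen (path_verts n) (path_adj n) L \<gamma> v"
      using h unfolding unfrozen_def by (elim bexE)
    have vn: "v < n" using v(1) by (simp add: path_verts_def)
    have "free n L \<gamma> v" by (rule free_iff[OF vn, THEN iffD1, OF v(2)])
    then show ?thesis using vn by blast
  qed
  have fa: "\<exists>v<n. free n L \<alpha> v" by (rule uf[OF assms(5)])
  have fb: "\<exists>v<n. free n L \<beta> v" by (rule uf[OF assms(6)])
  show ?thesis by (rule mainT[OF assms(1) d u assms(3) assms(4) fa fb])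
qed


end
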